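(* Let $a\geq 0$ and let $\{f_n, n\in\mathbb{N}\}\subset \mathcal{L}^+_a$ be a sequence that converges uniformly on compact subsets of $\mathbb{C}$ to a function $f\in\mathcal{A}_a$ which does not vanish identically. Then $\{f_n\}$ is a bounded subset of $\mathcal{A}_a$, it converges to $f$ in the topology of $\mathcal{A}_a$, and $f\in\mathcal{L}^+$.
   Context: Let $\mathcal{E}$ denote the set of all entire functions. For $b>0$ and $f\in\mathcal{E}$ put $\|f\|_b=\sup_{k\in\mathbb{N}_0} b^{-k}|f^{(k)}(0)|$. For $a\geq 0$ let $\mathcal{A}_a=\{f\in\mathcal{E}: \|f\|_b<\infty \ \forall b>a\}$ with the locally convex topology generated by the norms $\{\|\cdot\|_b: b>a\}$; a subset $B$ is bounded in $\mathcal{A}_a$ if $\sup_{f\in B}\|f\|_b<\infty$ for every $b>a$. The class $\mathcal{L}^+$ (Laguerre entire functions) consists of all entire functions of the form $f(z)=Cz^l e^{\alpha z}\prod_{j=1}^\infty(1+\beta_j z)$ with $C\in\mathbb{C}$, $l\in\mathbb{N}_0$, $\alpha\geq 0$, $\beta_j\geq\beta_{j+1}\geq 0$ and $\sum_j\beta_j<\infty$. Put $\mathcal{L}^+_a=\mathcal{L}^+\cap\mathcal{A}_a$. *)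

theory Defs
  imports "HOL-Complex_Analysis.Complex_Analysis"
begin

definition entire :: "(complex \<Rightarrow> complex) \<Rightarrow> bool" where
  "entire f \<longleftrightarrow> f holomorphic_on UNIV"

definition Anorm :: "real \<Rightarrow> (complex \<Rightarrow> complex) \<Rightarrow> ereal" where
  "Anorm b f = (SUP k::nat. ereal (norm ((deriv ^^ k) f 0) / b ^ k))"

definition A_space :: "real \<Rightarrow> (complex \<Rightarrow> complex) set" where
  "A_space a = {f. entire f \<and> (\<forall>b>a. Anorm b f < \<infinity>)}"

definition A_bounded :: "real \<Rightarrow> (complex \<Rightarrow> complex) set \<Rightarrow> bool" where
  "A_bounded a B \<longleftrightarrow> B \<subseteq> A_space a \<and> (\<forall>b>a. (SUP f\<in>B. Anorm b f) < \<infinity>)"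

text \<open>Convergence in the locally convex topology of A_a generated by the norms.\<close>
definition A_converges :: "real \<Rightarrow> (nat \<Rightarrow> complex \<Rightarrow> complex) \<Rightarrow> (complex \<Rightarrow> complex) \<Rightarrow> bool" where
  "A_converges a fs f \<longleftrightarrow> (\<forall>b>a. ((\<lambda>n. Anorm b (\<lambda>z. fs n z - f z)) \<longlongrightarrow> 0) sequentially)"

definition Laguerre :: "(complex \<Rightarrow> complex) set" where
  "Laguerre = {f. \<exists>(C::complex) (l::nat) (\<alpha>::real) (\<beta>::nat \<Rightarrow> real).
      \<alpha> \<ge> 0 \<and> (\<forall>j. \<beta> j \<ge> \<beta> (Suc j) \<and> \<beta> (Suc j) \<ge> 0) \<and> summable \<beta> \<and>
      (\<forall>z. f z = C * z ^ l * exp (of_real \<alpha> * z) * (\<Prod>j. 1 + of_real (\<beta> j) * z))}"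

definition Laguerre_a :: "real \<Rightarrow> (complex \<Rightarrow> complex) set" where
  "Laguerre_a a = Laguerre \<inter> A_space a"

end

theory Submission
  imports Defs
begin
lemma diag_subseq:
  fixes v :: "nat \<Rightarrow> nat \<Rightarrow> real"
  assumes "\<And>n i. \<bar>v n i\<bar> \<le> B"
  shows "\<exists>\<psi> w. strict_mono \<psi> \<and> (\<forall>i. (\<lambda>n. v (\<psi> n) i) \<longlonglongrightarrow> w i)"
proof -
  define S where "S = PiE (UNIV::nat set) (\<lambda>i. {-B..B})"
  have "compactin (product_topology (\<lambda>i. euclidean) UNIV) S"
    unfolding S_def by (subst compactin_PiE) auto
  hence "compact S" by (simp add: euclidean_product_topology)
  hence "seq_compact S" using compact_imp_seq_compact by blast
  moreover have "v n \<in> S" for n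
  proof -
    have "v n i \<in> {-B..B}" for i using assms[of n i] by (auto simp: abs_le_iff)
    thus ?thesis by (auto simp: S_def)
  qed
  ultimately obtain l r where "strict_mono r" "(v \<circ> r) \<longlonglongrightarrow> l"
    unfolding seq_compact_def by meson
  moreover have "(\<lambda>n. v (r n) i) \<longlonglongrightarrow> l i" for i
  proof -
    have "continuous_on UNIV (\<lambda>x::nat\<Rightarrow>real. x i)" by (rule continuous_on_product_coordinates)
    hence "isCont (\<lambda>x::nat\<Rightarrow>real. x i) l" by (metis continuous_on_eq_continuous_at open_UNIV UNIV_I)
    from isCont_tendsto_compose[OF this \<open>(v \<circ> r) \<longlonglongrightarrow> l\<close>] show ?thesis by (simp add: o_def)
  qed
  ultimately show ?thesis by blast
qed

lemma prod_lim:
  fixes \<beta> :: "nat \<Rightarrow> real" and z :: complex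
  assumes "\<And>j. \<beta> j \<ge> 0" "summable \<beta>"
  shows "(\<lambda>N. \<Prod>j<N. 1 + of_real (\<beta> j) * z) \<longlonglongrightarrow> (\<Prod>j. 1 + of_real (\<beta> j) * z)"
proof -
  have "summable (\<lambda>j. norm ((1 + of_real (\<beta> j) * z) - 1))"
    using summable_mult2[OF assms(2), of "norm z"] assms(1)
    by (simp add: norm_mult)
  hence "abs_convergent_prod (\<lambda>j. 1 + of_real (\<beta> j) * z)"
    by (rule summable_imp_abs_convergent_prod)
  hence "convergent_prod (\<lambda>j. 1 + of_real (\<beta> j) * z)"
    by (rule abs_convergent_prod_imp_convergent_prod)
  from convergent_prod_LIMSEQ[OF this]
  have "(\<lambda>n. \<Prod>j<Suc n. 1 + of_real (\<beta> j) * z) \<longlonglongrightarrow> (\<Prod>j. 1 + of_real (\<beta> j) * z)"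
    by (simp add: lessThan_Suc_atMost)
  thus ?thesis by (rule LIMSEQ_imp_Suc)
qed

lemma prod_diff_le:
  fixes a b :: "nat \<Rightarrow> complex"
  assumes "finite A" "\<And>j. j \<in> A \<Longrightarrow> norm (a j) \<le> E j" "\<And>j. j \<in> A \<Longrightarrow> norm (b j) \<le> E j"
    "\<And>j. j \<in> A \<Longrightarrow> 1 \<le> E j"
  shows "norm ((\<Prod>j\<in>A. a j) - (\<Prod>j\<in>A. b j)) \<le> (\<Sum>j\<in>A. norm (a j - b j)) * (\<Prod>j\<in>A. E j)"
  using assms
proof (induction A rule: finite_induct)
  case empty
  then show ?case by simp
next
  case (insert x A)
  have Ex0: "0 \<le> E x" using insert.prems(3)[of x] by simp
  have EA: "(\<Prod>j\<in>A. E j) \<ge> 1" using insert.prems(3) by (intro prod_ge_1) auto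
  have nb: "norm (\<Prod>j\<in>A. a j) \<le> (\<Prod>j\<in>A. E j)"
    unfolding prod_norm[symmetric] using insert.prems(1) by (intro prod_mono) auto
  have IH: "norm ((\<Prod>j\<in>A. a j) - (\<Prod>j\<in>A. b j)) \<le> (\<Sum>j\<in>A. norm (a j - b j)) * (\<Prod>j\<in>A. E j)"
    using insert.prems by (intro insert.IH) auto
  have "(\<Prod>j\<in>insert x A. a j) - (\<Prod>j\<in>insert x A. b j)
      = (a x - b x) * (\<Prod>j\<in>A. a j) + b x * ((\<Prod>j\<in>A. a j) - (\<Prod>j\<in>A. b j))"
    using insert.hyps by (simp add: algebra_simps)
  hence "norm ((\<Prod>j\<in>insert x A. a j) - (\<Prod>j\<in>insert x A. b j))
      \<le> norm (a x - b x) * norm (\<Prod>j\<in>A. a j) + norm (b x) * norm ((\<Prod>j\<in>A. a j) - (\<Prod>j\<in>A. b j))"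
    by (metis norm_mult norm_triangle_ineq)
  also have "\<dots> \<le> norm (a x - b x) * ((\<Prod>j\<in>A. E j) * E x) + E x * ((\<Sum>j\<in>A. norm (a j - b j)) * (\<Prod>j\<in>A. E j))"
  proof (intro add_mono mult_mono)
    show "norm (\<Prod>j\<in>A. a j) \<le> (\<Prod>j\<in>A. E j) * E x"
      using nb insert.prems(3)[of x] EA by (smt (verit) insertI1 mult_le_cancel_left1)
  qed (use insert.prems IH Ex0 in auto)
  also have "\<dots> = (\<Sum>j\<in>insert x A. norm (a j - b j)) * (\<Prod>j\<in>insert x A. E j)"
    using insert.hyps by (simp add: algebra_simps)
  finally show ?case .
qed

lemma exp_minus_lin_bound:
  fixes w :: complex
  shows "norm (1 + w - exp w) \<le> (norm w)^2 * exp (norm w)"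
proof -
  have sums: "(\<lambda>k. w ^ (k + 2) /\<^sub>R fact (k + 2)) sums (exp w - (\<Sum>k<2. w ^ k /\<^sub>R fact k))"
    by (intro sums_split_initial_segment exp_converges)
  have s2: "(\<lambda>k. norm w ^ k /\<^sub>R fact k) sums exp (norm w)" by (rule exp_converges)
  have sn: "summable (\<lambda>k. norm (w ^ (k + 2) /\<^sub>R fact (k + 2)))"
    using summable_norm_exp[of w]
    by (intro summable_ignore_initial_segment) (auto simp: norm_power)
  have "exp w - 1 - w = (\<Sum>k. w ^ (k + 2) /\<^sub>R fact (k + 2))"
    using sums by (simp add: sums_iff eval_nat_numeral)
  hence "norm (1 + w - exp w) = norm (\<Sum>k. w ^ (k + 2) /\<^sub>R fact (k + 2))"
    by (metis minus_diff_eq norm_minus_cancel diff_diff_eq2 add.commute diff_diff_eq)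
  also have "\<dots> \<le> (\<Sum>k. norm (w ^ (k + 2) /\<^sub>R fact (k + 2)))"
    using sn by (rule summable_norm)
  also have "\<dots> \<le> (\<Sum>k. (norm w)^2 * (norm w ^ k /\<^sub>R fact k))"
  proof (rule suminf_le)
    fix k
    have "norm (w ^ (k + 2) /\<^sub>R fact (k + 2)) = norm w ^ (k+2) / fact (k+2)"
      unfolding norm_scaleR norm_power by (simp add: divide_inverse_commute)
    also have "\<dots> = (norm w)^2 * norm w ^ k / fact (k+2)"
      by (simp add: power_add mult_ac power2_eq_square)
    also have "\<dots> \<le> (norm w)^2 * norm w ^ k / fact k"
    proof -
      have "fact k \<le> (fact (k+2)::real)" by (rule fact_mono) simp
      thus ?thesis by (rule divide_left_mono) (auto simp del: fact_Suc)
    qed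
    finally show "norm (w ^ (k + 2) /\<^sub>R fact (k + 2)) \<le> (norm w)^2 * (norm w ^ k /\<^sub>R fact k)"
      by (simp add: divide_simps)
  qed (use sn s2 in \<open>auto intro!: summable_mult simp: sums_iff\<close>)
  also have "\<dots> = (norm w)^2 * exp (norm w)"
    using s2 by (simp add: sums_iff suminf_mult)
  finally show ?thesis .
qed

lemma tail_fin:
  fixes \<beta> :: "nat \<Rightarrow> real" and z :: complex
  assumes "\<And>j. \<beta> j \<ge> 0" "finite A"
  shows "norm ((\<Prod>j\<in>A. 1 + of_real (\<beta> j) * z) - exp (z * of_real (\<Sum>j\<in>A. \<beta> j)))
         \<le> (norm z)^2 * (\<Sum>j\<in>A. (\<beta> j)^2) * exp (2 * norm z * (\<Sum>j\<in>A. \<beta> j))"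
proof -
  define S where "S = (\<Sum>j\<in>A. \<beta> j)"
  have S0: "S \<ge> 0" unfolding S_def using assms by (intro sum_nonneg) auto
  have bS: "\<beta> j \<le> S" if "j \<in> A" for j
    unfolding S_def using assms that by (intro member_le_sum) auto
  have e: "exp (z * of_real S) = (\<Prod>j\<in>A. exp (of_real (\<beta> j) * z))"
  proof -
    have "z * of_real S = (\<Sum>j\<in>A. of_real (\<beta> j) * z)"
      unfolding S_def of_real_sum sum_distrib_left by (simp add: mult.commute)
    thus ?thesis using exp_sum[OF assms(2)] by simp
  qed
  have "norm ((\<Prod>j\<in>A. 1 + of_real (\<beta> j) * z) - (\<Prod>j\<in>A. exp (of_real (\<beta> j) * z)))
      \<le> (\<Sum>j\<in>A. norm ((1 + of_real (\<beta> j) * z) - exp (of_real (\<beta> j) * z))) * (\<Prod>j\<in>A. exp (\<beta> j * norm z))"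
  proof (rule prod_diff_le[OF assms(2)])
    fix j assume "j \<in> A"
    have "norm (1 + of_real (\<beta> j) * z) \<le> 1 + \<beta> j * norm z"
      using assms(1)[of j] by (metis norm_one norm_triangle_ineq norm_mult norm_of_real abs_of_nonneg)
    also have "\<dots> \<le> exp (\<beta> j * norm z)" by (rule exp_ge_add_one_self)
    finally show "norm (1 + of_real (\<beta> j) * z) \<le> exp (\<beta> j * norm z)" .
    have "norm (exp (of_real (\<beta> j) * z)) \<le> exp (norm (of_real (\<beta> j) * z))" by (rule norm_exp)
    also have "norm (of_real (\<beta> j) * z) = \<beta> j * norm z" using assms(1)[of j] by (simp add: norm_mult)
    finally show "norm (exp (of_real (\<beta> j) * z)) \<le> exp (\<beta> j * norm z)" .
    show "1 \<le> exp (\<beta> j * norm z)" using assms(1)[of j] by simp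
  qed
  also have "(\<Prod>j\<in>A. exp (\<beta> j * norm z)) = exp (S * norm z)"
    unfolding S_def by (simp add: exp_sum[OF assms(2), symmetric] sum_distrib_right)
  also have "(\<Sum>j\<in>A. norm ((1 + of_real (\<beta> j) * z) - exp (of_real (\<beta> j) * z)))
      \<le> (\<Sum>j\<in>A. (norm z)^2 * (\<beta> j)^2 * exp (S * norm z))"
  proof (rule sum_mono)
    fix j assume j: "j \<in> A"
    have "norm ((1 + of_real (\<beta> j) * z) - exp (of_real (\<beta> j) * z)) \<le> (norm (of_real (\<beta> j) * z))^2 * exp (norm (of_real (\<beta> j) * z))"
      by (rule exp_minus_lin_bound)
    also have "norm (of_real (\<beta> j) * z) = \<beta> j * norm z" using assms(1)[of j] by (simp add: norm_mult)
    also have "exp (\<beta> j * norm z) \<le> exp (S * norm z)"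
      using bS[OF j] by (simp add: mult_right_mono)
    hence "(\<beta> j * norm z)^2 * exp (\<beta> j * norm z) \<le> (\<beta> j * norm z)^2 * exp (S * norm z)"
      by (intro mult_left_mono) auto
    finally show "norm ((1 + of_real (\<beta> j) * z) - exp (of_real (\<beta> j) * z)) \<le> (norm z)^2 * (\<beta> j)^2 * exp (S * norm z)"
      by (simp add: power_mult_distrib mult_ac)
  qed
  hence "(\<Sum>j\<in>A. norm ((1 + of_real (\<beta> j) * z) - exp (of_real (\<beta> j) * z))) * exp (S * norm z)
      \<le> (\<Sum>j\<in>A. (norm z)^2 * (\<beta> j)^2 * exp (S * norm z)) * exp (S * norm z)"
    by (intro mult_right_mono) auto
  also have "(\<Sum>j\<in>A. (norm z)^2 * (\<beta> j)^2 * exp (S * norm z)) * exp (S * norm z)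
      = (norm z)^2 * (\<Sum>j\<in>A. (\<beta> j)^2) * (exp (S * norm z) * exp (S * norm z))"
    by (simp add: sum_distrib_right sum_distrib_left mult_ac)
  also have "exp (S * norm z) * exp (S * norm z) = exp (2 * norm z * S)"
    by (subst exp_add[symmetric]) (simp add: algebra_simps)
  finally have "norm ((\<Prod>j\<in>A. 1 + of_real (\<beta> j) * z) - exp (z * of_real S)) \<le> (norm z)^2 * (\<Sum>j\<in>A. (\<beta> j)^2) * exp (2 * norm z * S)"
    unfolding e .
  thus ?thesis unfolding S_def .
qed

definition Tl :: "(nat \<Rightarrow> real) \<Rightarrow> nat \<Rightarrow> real" where
  "Tl \<beta> M = (\<Sum>j. \<beta> j) - (\<Sum>j<M. \<beta> j)"

lemma Tl_lim:
  assumes "summable \<beta>"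
  shows "(\<lambda>N. \<Sum>j\<in>{M..<N}. \<beta> j) \<longlonglongrightarrow> Tl \<beta> M"
proof -
  have "(\<lambda>N. (\<Sum>j<N. \<beta> j) - (\<Sum>j<M. \<beta> j)) \<longlonglongrightarrow> Tl \<beta> M"
    unfolding Tl_def by (intro tendsto_diff summable_LIMSEQ assms tendsto_const)
  moreover have "eventually (\<lambda>N. (\<Sum>j<N. \<beta> j) - (\<Sum>j<M. \<beta> j) = (\<Sum>j\<in>{M..<N}. \<beta> j)) sequentially"
    using eventually_ge_at_top[of M]
  proof eventually_elim
    case (elim N)
    have "{..<N} = {..<M} \<union> {M..<N}" using elim by auto
    hence "(\<Sum>j<N. \<beta> j) = (\<Sum>j<M. \<beta> j) + (\<Sum>j\<in>{M..<N}. \<beta> j)"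
      by (simp add: sum.union_disjoint ivl_disj_int)
    thus ?case by simp
  qed
  ultimately show ?thesis by (rule Lim_transform_eventually)
qed

lemma Tl_nonneg:
  assumes "summable \<beta>" "\<And>j. \<beta> j \<ge> 0"
  shows "Tl \<beta> M \<ge> 0"
  unfolding Tl_def using sum_le_suminf[OF assms(1), of "{..<M}"] assms(2) by auto

lemma Tl_le_sum:
  assumes "summable \<beta>" "\<And>j. \<beta> j \<ge> 0"
  shows "Tl \<beta> M \<le> (\<Sum>j. \<beta> j)"
  unfolding Tl_def using assms(2) by (simp add: sum_nonneg)

lemma decr_le:
  fixes \<beta> :: "nat \<Rightarrow> real"
  assumes "\<And>j. \<beta> (Suc j) \<le> \<beta> j" "i \<le> j"
  shows "\<beta> j \<le> \<beta> i"
proof -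
  have "decseq \<beta>" using assms(1) by (intro decseq_SucI) auto
  thus ?thesis using assms(2) by (simp add: decseq_def)
qed

lemma tail_inf:
  fixes \<beta> :: "nat \<Rightarrow> real" and z :: complex
  assumes nn: "\<And>j. \<beta> j \<ge> 0" and dec: "\<And>j. \<beta> (Suc j) \<le> \<beta> j" and sm: "summable \<beta>"
  shows "norm ((\<Prod>j. 1 + of_real (\<beta> j) * z) - (\<Prod>j<M. 1 + of_real (\<beta> j) * z) * exp (z * of_real (Tl \<beta> M)))
         \<le> (\<Prod>j<M. norm (1 + of_real (\<beta> j) * z)) * ((norm z)^2 * \<beta> M * Tl \<beta> M * exp (2 * norm z * Tl \<beta> M))"
proof -
  define s where "s N = (\<Sum>j\<in>{M..<N}. \<beta> j)" for N
  have sT: "s \<longlonglongrightarrow> Tl \<beta> M" unfolding s_def by (rule Tl_lim[OF sm])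
  have sle: "s N \<le> Tl \<beta> M" for N
  proof (rule LIMSEQ_le_const[OF sT])
    show "\<exists>N0. \<forall>n\<ge>N0. s N \<le> s n"
      by (rule exI[of _ N]) (auto simp: s_def nn intro!: sum_mono2)
  qed
  have s0: "s N \<ge> 0" for N unfolding s_def using nn by (intro sum_nonneg) auto
  have lhs: "(\<lambda>N. norm ((\<Prod>j<N. 1 + of_real (\<beta> j) * z) - (\<Prod>j<M. 1 + of_real (\<beta> j) * z) * exp (z * of_real (s N))))
      \<longlonglongrightarrow> norm ((\<Prod>j. 1 + of_real (\<beta> j) * z) - (\<Prod>j<M. 1 + of_real (\<beta> j) * z) * exp (z * of_real (Tl \<beta> M)))"
    by (intro tendsto_intros prod_lim nn sm sT)
  show ?thesis
  proof (rule LIMSEQ_le_const2[OF lhs], rule exI[of _ M], intro allI impI)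
    fix N assume N: "N \<ge> M"
    have split: "(\<Prod>j<N. 1 + of_real (\<beta> j) * z) = (\<Prod>j<M. 1 + of_real (\<beta> j) * z) * (\<Prod>j\<in>{M..<N}. 1 + of_real (\<beta> j) * z)"
    proof -
      have "{..<N} = {..<M} \<union> {M..<N}" using N by auto
      thus ?thesis by (simp add: prod.union_disjoint ivl_disj_int)
    qed
    have sq: "(\<Sum>j\<in>{M..<N}. (\<beta> j)^2) \<le> \<beta> M * s N"
      unfolding s_def sum_distrib_left
    proof (rule sum_mono)
      fix j assume "j \<in> {M..<N}"
      hence "\<beta> j \<le> \<beta> M" using decr_le[of \<beta>, OF dec] by auto
      thus "(\<beta> j)^2 \<le> \<beta> M * \<beta> j" using nn[of j] by (simp add: power2_eq_square mult_right_mono)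
    qed
    have "norm ((\<Prod>j<N. 1 + of_real (\<beta> j) * z) - (\<Prod>j<M. 1 + of_real (\<beta> j) * z) * exp (z * of_real (s N)))
        = (\<Prod>j<M. norm (1 + of_real (\<beta> j) * z)) * norm ((\<Prod>j\<in>{M..<N}. 1 + of_real (\<beta> j) * z) - exp (z * of_real (s N)))"
      unfolding split by (simp add: right_diff_distrib[symmetric] norm_mult prod_norm)
    also have "\<dots> \<le> (\<Prod>j<M. norm (1 + of_real (\<beta> j) * z)) * ((norm z)^2 * (\<Sum>j\<in>{M..<N}. (\<beta> j)^2) * exp (2 * norm z * s N))"
    proof (intro mult_left_mono)
      show "norm ((\<Prod>j\<in>{M..<N}. 1 + of_real (\<beta> j) * z) - exp (z * of_real (s N))) \<le> (norm z)^2 * (\<Sum>j\<in>{M..<N}. (\<beta> j)^2) * exp (2 * norm z * s N)"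
        unfolding s_def by (rule tail_fin[OF nn]) simp
    qed (auto intro!: prod_nonneg)
    also have "\<dots> \<le> (\<Prod>j<M. norm (1 + of_real (\<beta> j) * z)) * ((norm z)^2 * (\<beta> M * Tl \<beta> M) * exp (2 * norm z * Tl \<beta> M))"
    proof (intro mult_left_mono mult_mono order.refl)
      show "(\<Sum>j\<in>{M..<N}. (\<beta> j)^2) \<le> \<beta> M * Tl \<beta> M"
        using sq sle[of N] nn[of M] by (meson mult_left_mono order_trans)
      show "exp (2 * norm z * s N) \<le> exp (2 * norm z * Tl \<beta> M)"
        using sle[of N] by (simp add: mult_left_mono)
    qed (auto intro!: prod_nonneg mult_nonneg_nonneg nn Tl_nonneg sm)
    finally show "norm ((\<Prod>j<N. 1 + of_real (\<beta> j) * z) - (\<Prod>j<M. 1 + of_real (\<beta> j) * z) * exp (z * of_real (s N)))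
        \<le> (\<Prod>j<M. norm (1 + of_real (\<beta> j) * z)) * ((norm z)^2 * \<beta> M * Tl \<beta> M * exp (2 * norm z * Tl \<beta> M))"
      by (simp add: mult_ac)
  qed
qed

lemma prod_upper:
  fixes \<beta> :: "nat \<Rightarrow> real" and z :: complex
  assumes nn: "\<And>j. \<beta> j \<ge> 0" and sm: "summable \<beta>"
  shows "norm (\<Prod>j. 1 + of_real (\<beta> j) * z) \<le> (\<Prod>j<M. norm (1 + of_real (\<beta> j) * z)) * exp (norm z * Tl \<beta> M)"
proof -
  define s where "s N = (\<Sum>j\<in>{M..<N}. \<beta> j)" for N
  have sT: "s \<longlonglongrightarrow> Tl \<beta> M" unfolding s_def by (rule Tl_lim[OF sm])
  have sle: "s N \<le> Tl \<beta> M" for N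
  proof (rule LIMSEQ_le_const[OF sT])
    show "\<exists>N0. \<forall>n\<ge>N0. s N \<le> s n"
      by (rule exI[of _ N]) (auto simp: s_def nn intro!: sum_mono2)
  qed
  have lhs: "(\<lambda>N. norm (\<Prod>j<N. 1 + of_real (\<beta> j) * z)) \<longlonglongrightarrow> norm (\<Prod>j. 1 + of_real (\<beta> j) * z)"
    by (intro tendsto_intros prod_lim nn sm)
  show ?thesis
  proof (rule LIMSEQ_le_const2[OF lhs], rule exI[of _ M], intro allI impI)
    fix N assume N: "N \<ge> M"
    have split: "(\<Prod>j<N. 1 + of_real (\<beta> j) * z) = (\<Prod>j<M. 1 + of_real (\<beta> j) * z) * (\<Prod>j\<in>{M..<N}. 1 + of_real (\<beta> j) * z)"
    proof -
      have "{..<N} = {..<M} \<union> {M..<N}" using N by auto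
      thus ?thesis by (simp add: prod.union_disjoint ivl_disj_int)
    qed
    have "norm (\<Prod>j\<in>{M..<N}. 1 + of_real (\<beta> j) * z) \<le> (\<Prod>j\<in>{M..<N}. exp (\<beta> j * norm z))"
      unfolding prod_norm[symmetric]
    proof (rule prod_mono, safe)
      fix j
      have "norm (1 + of_real (\<beta> j) * z) \<le> 1 + \<beta> j * norm z"
        using nn[of j] by (metis norm_one norm_triangle_ineq norm_mult norm_of_real abs_of_nonneg)
      also have "\<dots> \<le> exp (\<beta> j * norm z)" by (rule exp_ge_add_one_self)
      finally show "norm (1 + of_real (\<beta> j) * z) \<le> exp (\<beta> j * norm z)" .
    qed auto
    also have "\<dots> = exp (norm z * s N)"
      unfolding s_def by (simp add: exp_sum sum_distrib_left mult.commute)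
    also have "\<dots> \<le> exp (norm z * Tl \<beta> M)" using sle[of N] by (simp add: mult_left_mono)
    finally have "norm (\<Prod>j\<in>{M..<N}. 1 + of_real (\<beta> j) * z) \<le> exp (norm z * Tl \<beta> M)" .
    thus "norm (\<Prod>j<N. 1 + of_real (\<beta> j) * z) \<le> (\<Prod>j<M. norm (1 + of_real (\<beta> j) * z)) * exp (norm z * Tl \<beta> M)"
      unfolding split norm_mult prod_norm by (intro mult_left_mono) (auto intro!: prod_nonneg)
  qed
qed

definition RP :: "(nat \<Rightarrow> real) \<Rightarrow> real \<Rightarrow> real" where
  "RP \<beta> \<rho> = Re (\<Prod>j. 1 + of_real (\<beta> j) * of_real \<rho>)"

lemma RP_lim:
  assumes nn: "\<And>j. \<beta> j \<ge> 0" and sm: "summable \<beta>"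
  shows "(\<lambda>N. \<Prod>j<N. 1 + \<beta> j * \<rho>) \<longlonglongrightarrow> RP \<beta> \<rho>"
    and "(\<Prod>j. 1 + of_real (\<beta> j) * of_real \<rho>) = (of_real (RP \<beta> \<rho>) :: complex)"
proof -
  have L: "(\<lambda>N. \<Prod>j<N. 1 + of_real (\<beta> j) * (of_real \<rho>::complex)) \<longlonglongrightarrow> (\<Prod>j. 1 + of_real (\<beta> j) * of_real \<rho>)"
    by (rule prod_lim[OF nn sm])
  have eq: "(\<Prod>j<N. 1 + of_real (\<beta> j) * (of_real \<rho>::complex)) = of_real (\<Prod>j<N. 1 + \<beta> j * \<rho>)" for N
    by simp
  from tendsto_Re[OF L] show "(\<lambda>N. \<Prod>j<N. 1 + \<beta> j * \<rho>) \<longlonglongrightarrow> RP \<beta> \<rho>"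
    unfolding eq RP_def Re_complex_of_real .
  from tendsto_Im[OF L] have "(\<lambda>N. 0) \<longlonglongrightarrow> Im (\<Prod>j. 1 + of_real (\<beta> j) * of_real \<rho>)"
    unfolding eq Im_complex_of_real .
  hence "Im (\<Prod>j. 1 + of_real (\<beta> j) * (of_real \<rho>::complex)) = 0"
    using LIMSEQ_unique tendsto_const by blast
  thus "(\<Prod>j. 1 + of_real (\<beta> j) * of_real \<rho>) = (of_real (RP \<beta> \<rho>) :: complex)"
    unfolding RP_def by (simp add: complex_eq_iff)
qed

lemma prod_split_at:
  fixes f :: "nat \<Rightarrow> 'a::comm_monoid_mult"
  assumes "m \<le> N"
  shows "(\<Prod>j<N. f j) = (\<Prod>j<m. f j) * (\<Prod>j\<in>{m..<N}. f j)"
proof -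
  have "{..<N} = {..<m} \<union> {m..<N}" using assms by auto
  thus ?thesis by (simp add: prod.union_disjoint ivl_disj_int)
qed

lemma RP_ge:
  assumes nn: "\<And>j. \<beta> j \<ge> 0" and sm: "summable \<beta>" and "\<rho> \<ge> 0"
  shows "(\<Prod>j<m. 1 + \<beta> j * \<rho>) \<le> RP \<beta> \<rho>"
proof (rule LIMSEQ_le_const[OF RP_lim(1)[OF nn sm]], rule exI[of _ m], intro allI impI)
  fix N assume "m \<le> N"
  have "1 \<le> (\<Prod>j\<in>{m..<N}. 1 + \<beta> j * \<rho>)" using nn assms(3) by (intro prod_ge_1) auto
  moreover have "0 \<le> (\<Prod>j<m. 1 + \<beta> j * \<rho>)" using nn assms(3) by (intro prod_nonneg) auto
  ultimately show "(\<Prod>j<m. 1 + \<beta> j * \<rho>) \<le> (\<Prod>j<N. 1 + \<beta> j * \<rho>)"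
    unfolding prod_split_at[OF \<open>m \<le> N\<close>] by (simp add: mult_le_cancel_left1)
qed

lemma RP_ge1:
  assumes nn: "\<And>j. \<beta> j \<ge> 0" and sm: "summable \<beta>" and "\<rho> \<ge> 0"
  shows "1 \<le> RP \<beta> \<rho>"
  using RP_ge[OF assms, of 0] by simp

lemma RP_ratio:
  assumes nn: "\<And>j. \<beta> j \<ge> 0" and sm: "summable \<beta>" and "0 \<le> \<rho>1" "\<rho>1 \<le> \<rho>2"
  shows "RP \<beta> \<rho>1 * (\<Prod>j<m. 1 + \<beta> j * \<rho>2) \<le> RP \<beta> \<rho>2 * (\<Prod>j<m. 1 + \<beta> j * \<rho>1)"
proof (rule tendsto_le[OF _ tendsto_mult_right[OF RP_lim(1)[OF nn sm]] tendsto_mult_right[OF RP_lim(1)[OF nn sm]]])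
  show "eventually (\<lambda>N. (\<Prod>j<N. 1 + \<beta> j * \<rho>1) * (\<Prod>j<m. 1 + \<beta> j * \<rho>2) \<le> (\<Prod>j<N. 1 + \<beta> j * \<rho>2) * (\<Prod>j<m. 1 + \<beta> j * \<rho>1)) sequentially"
    using eventually_ge_at_top[of m]
  proof eventually_elim
    case (elim N)
    have "(\<Prod>j\<in>{m..<N}. 1 + \<beta> j * \<rho>1) \<le> (\<Prod>j\<in>{m..<N}. 1 + \<beta> j * \<rho>2)"
      using nn assms(3,4) by (intro prod_mono) (auto intro: mult_left_mono add_nonneg_nonneg)
    moreover have "0 \<le> (\<Prod>j<m. 1 + \<beta> j * \<rho>1) * (\<Prod>j<m. 1 + \<beta> j * \<rho>2)"
      using nn assms(3,4) by (intro mult_nonneg_nonneg prod_nonneg) auto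
    ultimately have "((\<Prod>j<m. 1 + \<beta> j * \<rho>1) * (\<Prod>j<m. 1 + \<beta> j * \<rho>2)) * (\<Prod>j\<in>{m..<N}. 1 + \<beta> j * \<rho>1)
       \<le> ((\<Prod>j<m. 1 + \<beta> j * \<rho>1) * (\<Prod>j<m. 1 + \<beta> j * \<rho>2)) * (\<Prod>j\<in>{m..<N}. 1 + \<beta> j * \<rho>2)"
      by (rule mult_left_mono)
    thus ?case
      unfolding prod_split_at[OF elim] by (simp add: mult_ac)
  qed
qed simp

lemma prod_lower_fin:
  fixes \<beta> :: "nat \<Rightarrow> real"
  assumes nn: "\<And>j. \<beta> j \<ge> 0" and B: "\<And>j. j \<ge> J \<Longrightarrow> \<beta> j \<le> B" and "B \<ge> 0"
    and "0 \<le> \<rho>0" "\<rho>0 \<le> \<rho>1"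
  defines "c \<equiv> (\<rho>1 - \<rho>0) / (1 + B * \<rho>0)"
  shows "(\<Prod>j<N. 1 + \<beta> j * \<rho>0) * (1 + c * (\<Sum>j\<in>{J..<N}. \<beta> j)) \<le> (\<Prod>j<N. 1 + \<beta> j * \<rho>1)"
proof (induction N)
  case 0
  then show ?case by simp
next
  case (Suc N)
  have c0: "c \<ge> 0" unfolding c_def using assms by (auto intro!: divide_nonneg_pos add_pos_nonneg)
  have P0: "(\<Prod>j<N. 1 + \<beta> j * \<rho>0) \<ge> 0" using nn assms by (intro prod_nonneg) auto
  have s0: "(\<Sum>j\<in>{J..<N}. \<beta> j) \<ge> 0" using nn by (intro sum_nonneg) auto
  have P1: "(\<Prod>j<N. 1 + \<beta> j * \<rho>1) \<ge> 0" using nn assms by (intro prod_nonneg) auto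
  show ?case
  proof (cases "N < J")
    case True
    hence e: "{J..<Suc N} = {J..<N}" by auto
    have "(1 + \<beta> N * \<rho>0) \<le> 1 + \<beta> N * \<rho>1" using nn[of N] assms by (simp add: mult_left_mono)
    moreover have "0 \<le> 1 + \<beta> N * \<rho>0" using nn[of N] assms by simp
    moreover have "0 \<le> (1 + c * (\<Sum>j\<in>{J..<N}. \<beta> j))" using c0 s0 by simp
    ultimately have "(\<Prod>j<N. 1 + \<beta> j * \<rho>0) * (1 + c * (\<Sum>j\<in>{J..<N}. \<beta> j)) * (1 + \<beta> N * \<rho>0)
        \<le> (\<Prod>j<N. 1 + \<beta> j * \<rho>1) * (1 + \<beta> N * \<rho>1)"
      using Suc.IH P0 P1 by (intro mult_mono) (auto intro!: mult_nonneg_nonneg)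
    thus ?thesis unfolding e by (simp add: mult_ac)
  next
    case False
    hence e: "{J..<Suc N} = insert N {J..<N}" by auto
    have bN: "\<beta> N \<le> B" using B False by simp
    have key: "(1 + \<beta> N * \<rho>0) * (1 + c * \<beta> N) \<le> 1 + \<beta> N * \<rho>1"
    proof -
      have "c * (1 + \<beta> N * \<rho>0) \<le> c * (1 + B * \<rho>0)"
        using c0 bN assms(4) by (intro mult_left_mono) (auto intro: mult_right_mono)
      also have "\<dots> = \<rho>1 - \<rho>0"
      proof -
        have "1 + B * \<rho>0 > 0" using assms by (simp add: add_pos_nonneg)
        thus ?thesis unfolding c_def by simp
      qed
      finally have "c * (1 + \<beta> N * \<rho>0) * \<beta> N \<le> (\<rho>1 - \<rho>0) * \<beta> N"
        using nn[of N] by (intro mult_right_mono) auto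
      thus ?thesis by (simp add: algebra_simps)
    qed
    define s where "s = (\<Sum>j\<in>{J..<N}. \<beta> j)"
    have "(1 + c * s) * (1 + c * \<beta> N) \<ge> 1 + c * (s + \<beta> N)"
      using c0 nn[of N] s0 unfolding s_def by (simp add: algebra_simps)
    moreover have "0 \<le> (\<Prod>j<N. 1 + \<beta> j * \<rho>0) * (1 + \<beta> N * \<rho>0)"
      using P0 nn[of N] assms(4) by simp
    ultimately have "((\<Prod>j<N. 1 + \<beta> j * \<rho>0) * (1 + \<beta> N * \<rho>0)) * (1 + c * (s + \<beta> N))
        \<le> ((\<Prod>j<N. 1 + \<beta> j * \<rho>0) * (1 + \<beta> N * \<rho>0)) * ((1 + c * s) * (1 + c * \<beta> N))"
      by (rule mult_left_mono)
    moreover have "(\<Sum>j\<in>{J..<Suc N}. \<beta> j) = s + \<beta> N" unfolding e s_def by simp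
    ultimately have "(\<Prod>j<Suc N. 1 + \<beta> j * \<rho>0) * (1 + c * (\<Sum>j\<in>{J..<Suc N}. \<beta> j))
        \<le> (\<Prod>j<N. 1 + \<beta> j * \<rho>0) * (1 + c * s) * ((1 + \<beta> N * \<rho>0) * (1 + c * \<beta> N))"
      by (simp add: mult_ac)
    also have "\<dots> \<le> (\<Prod>j<N. 1 + \<beta> j * \<rho>1) * (1 + \<beta> N * \<rho>1)"
      using Suc.IH key P0 P1 c0 s0 nn[of N] assms(4) unfolding s_def
      by (intro mult_mono) (auto intro!: mult_nonneg_nonneg)
    finally show ?thesis by (simp add: mult_ac)
  qed
qed

lemma RP_lower:
  fixes \<beta> :: "nat \<Rightarrow> real"
  assumes nn: "\<And>j. \<beta> j \<ge> 0" and sm: "summable \<beta>" and B: "\<And>j. j \<ge> J \<Longrightarrow> \<beta> j \<le> B" and "B \<ge> 0"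
    and "0 \<le> \<rho>0" "\<rho>0 \<le> \<rho>1"
  shows "RP \<beta> \<rho>0 * (1 + (\<rho>1 - \<rho>0) / (1 + B * \<rho>0) * Tl \<beta> J) \<le> RP \<beta> \<rho>1"
proof (rule tendsto_le[OF _ RP_lim(1)[OF nn sm]])
  show "(\<lambda>N. (\<Prod>j<N. 1 + \<beta> j * \<rho>0) * (1 + (\<rho>1 - \<rho>0) / (1 + B * \<rho>0) * (\<Sum>j\<in>{J..<N}. \<beta> j)))
     \<longlonglongrightarrow> RP \<beta> \<rho>0 * (1 + (\<rho>1 - \<rho>0) / (1 + B * \<rho>0) * Tl \<beta> J)"
    by (intro tendsto_intros RP_lim(1)[OF nn sm] Tl_lim[OF sm])
  show "eventually (\<lambda>N. (\<Prod>j<N. 1 + \<beta> j * \<rho>0) * (1 + (\<rho>1 - \<rho>0) / (1 + B * \<rho>0) * (\<Sum>j\<in>{J..<N}. \<beta> j))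
     \<le> (\<Prod>j<N. 1 + \<beta> j * \<rho>1)) sequentially"
    by (intro always_eventually allI prod_lower_fin assms)
qed simp

lemma e_le_pow:
  assumes "k \<ge> (1::nat)"
  shows "exp 1 * real k ^ (k+1) \<le> (real k + 1) ^ (k+1)"
proof -
  have k0: "real k > 0" using assms by simp
  have "ln (real k / (real k + 1)) \<le> real k / (real k + 1) - 1"
    using k0 by (intro ln_le_minus_one) auto
  also have "\<dots> = - 1 / (real k + 1)" using k0 by (simp add: field_simps)
  finally have "ln (real k / (real k + 1)) \<le> - 1 / (real k + 1)" .
  moreover have "ln ((real k + 1) / real k) = - ln (real k / (real k + 1))"
    using k0 by (simp add: ln_div)
  ultimately have "1 / (real k + 1) \<le> ln ((real k + 1) / real k)" by simp
  hence "1 \<le> real (k+1) * ln ((real k + 1) / real k)"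
    using k0 by (simp add: field_simps)
  hence "exp 1 \<le> exp (real (k+1) * ln ((real k + 1) / real k))" by simp
  also have "\<dots> = exp (ln ((real k + 1) / real k)) ^ (k+1)"
    by (rule exp_of_nat_mult)
  also have "\<dots> = ((real k + 1) / real k) ^ (k+1)" using k0 by simp
  also have "\<dots> = (real k + 1) ^ (k+1) / real k ^ (k+1)" by (simp add: power_divide)
  finally show ?thesis using k0 by (simp add: field_simps)
qed

lemma fact_le_bound:
  assumes "k \<ge> (1::nat)"
  shows "fact k \<le> real k ^ (k+1) * exp (1 - real k)"
  using assms
proof (induction k rule: nat_induct_at_least)
  case base
  then show ?case by simp
next
  case (Suc k)
  have "fact (Suc k) = (real k + 1) * fact k" by simp
  also have "\<dots> \<le> (real k + 1) * (real k ^ (k+1) * exp (1 - real k))"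
    using Suc.IH by (intro mult_left_mono) auto
  also have "\<dots> = (real k + 1) * ((exp 1 * real k ^ (k+1)) * exp (- real k))"
    by (simp add: exp_diff exp_minus field_simps)
  also have "\<dots> \<le> (real k + 1) * ((real k + 1) ^ (k+1) * exp (- real k))"
    using e_le_pow[OF Suc.hyps] by (intro mult_left_mono mult_right_mono) auto
  also have "\<dots> = real (Suc k) ^ (Suc k + 1) * exp (1 - real (Suc k))"
    by (simp add: algebra_simps)
  finally show ?case .
qed

lemma pow_geom_lim:
  fixes q :: real
  assumes "0 \<le> q" "q < 1"
  shows "(\<lambda>k. real k ^ m * q ^ k) \<longlonglongrightarrow> 0"
proof (cases "m = 0")
  case True
  then show ?thesis using assms by (simp add: LIMSEQ_power_zero)
next
  case False
  define r where "r = root m q"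
  have rm: "r ^ m = q" unfolding r_def using False assms by (simp add: real_root_pow_pos2)
  have r0: "r \<ge> 0" unfolding r_def using assms real_root_ge_zero by blast
  have r1: "r < 1" unfolding r_def using False assms by simp
  have "(\<lambda>k. real k * r ^ k) \<longlonglongrightarrow> 0"
    using powser_times_n_limit_0[of r] r0 r1 by simp
  hence "(\<lambda>k. (real k * r ^ k) ^ m) \<longlonglongrightarrow> 0 ^ m" by (intro tendsto_intros)
  moreover have "(real k * r ^ k) ^ m = real k ^ m * q ^ k" for k
    by (simp add: power_mult_distrib rm[symmetric] power_mult[symmetric] mult.commute)
  moreover have "(0::real) ^ m = 0" using False by simp
  ultimately show ?thesis by simp
qed

lemma growth_coef:
  fixes A s b :: real and d :: nat
  assumes s: "0 < s" "s < b" and A: "0 \<le> A"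
  shows "\<exists>G. \<forall>g. g holomorphic_on UNIV \<longrightarrow> (\<forall>z. norm (g z) \<le> A * (1 + norm z) ^ d * exp (s * norm z))
            \<longrightarrow> (\<forall>k. norm ((deriv ^^ k) g 0) \<le> G * b ^ k)"
proof -
  define q where "q = s / b"
  have q0: "0 \<le> q" and q1: "q < 1" using s by (auto simp: q_def)
  have qnz: "q \<noteq> 0" using s by (simp add: q_def)
  have "(\<lambda>k. real (Suc k) ^ (d+1) * q ^ (Suc k)) \<longlonglongrightarrow> 0"
    using pow_geom_lim[OF q0 q1, of "d+1"] by (rule LIMSEQ_Suc)
  hence "(\<lambda>k. (real (Suc k) ^ (d+1) * q ^ (Suc k)) / q) \<longlonglongrightarrow> 0 / q" using qnz by (intro tendsto_intros)
  moreover have "(real (Suc k) ^ (d+1) * q ^ (Suc k)) / q = (real k + 1) ^ (d+1) * q ^ k" for k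
    using s by (simp add: q_def field_simps)
  ultimately have "(\<lambda>k. (real k + 1) ^ (d+1) * q ^ k) \<longlonglongrightarrow> 0" by simp
  hence "Bseq (\<lambda>k. (real k + 1) ^ (d+1) * q ^ k)" by (rule convergent_imp_Bseq[OF convergentI])
  then obtain V where V: "\<And>k. norm ((real k + 1) ^ (d+1) * q ^ k) \<le> V" by (auto simp: Bseq_def)
  define G where "G = A * max 1 (exp 1 * (1 + 1/s) ^ d * V)"
  show ?thesis
  proof (rule exI[of _ G], intro allI impI)
    fix g :: "complex \<Rightarrow> complex" and k :: nat
    assume hol: "g holomorphic_on UNIV"
      and gb: "\<forall>z. norm (g z) \<le> A * (1 + norm z) ^ d * exp (s * norm z)"
    show "norm ((deriv ^^ k) g 0) \<le> G * b ^ k"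
    proof (cases "k = 0")
      case True
      have "norm (g 0) \<le> A" using gb[rule_format, of 0] by simp
      also have "A \<le> G" unfolding G_def using A by (simp add: mult_le_cancel_left1)
      finally show ?thesis using True by simp
    next
      case False
      hence k1: "k \<ge> 1" by simp
      define r where "r = real k / s"
      have r0: "r > 0" using k1 s by (simp add: r_def)
      define Bd where "Bd = A * (1 + r) ^ d * exp (s * r)"
      have "norm ((deriv ^^ k) g 0) \<le> fact k * Bd / r ^ k"
      proof (rule Cauchy_inequality)
        show "g holomorphic_on ball 0 r" using hol by (rule holomorphic_on_subset) auto
        show "continuous_on (cball 0 r) g"
          using holomorphic_on_imp_continuous_on[OF hol] by (rule continuous_on_subset) auto
        show "0 < r" by (rule r0)
        fix x :: complex assume "norm (0 - x) = r"
        hence "norm x = r" by simp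
        thus "norm (g x) \<le> Bd" using gb[rule_format, of x] by (simp add: Bd_def)
      qed
      also have "\<dots> \<le> (real k ^ (k+1) * exp (1 - real k)) * Bd / r ^ k"
        using fact_le_bound[OF k1] r0 A by (intro divide_right_mono mult_right_mono) (auto simp: Bd_def)
      also have "\<dots> = A * (exp 1 * real k * (1 + real k / s) ^ d * q ^ k) * b ^ k"
      proof -
        have "exp (s * r) = exp (real k)" using s by (simp add: r_def)
        moreover have "exp (1 - real k) * exp (real k) = exp 1" by (simp add: exp_diff)
        moreover have "r ^ k = real k ^ k / s ^ k" by (simp add: r_def power_divide)
        moreover have "q ^ k * b ^ k = s ^ k" using s by (simp add: q_def power_divide)
        ultimately show ?thesis using s k1 unfolding Bd_def
          by (simp add: field_simps r_def power_add)
      qed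
      also have "\<dots> \<le> A * (exp 1 * (1 + 1/s) ^ d * V) * b ^ k"
      proof (intro mult_right_mono mult_left_mono)
        have "1 + real k / s \<le> (1 + 1/s) * (real k + 1)" using s by (simp add: field_simps)
        hence "(1 + real k / s) ^ d \<le> ((1 + 1/s) * (real k + 1)) ^ d"
          using s by (intro power_mono) auto
        hence "real k * (1 + real k / s) ^ d * q ^ k \<le> (real k + 1) * ((1 + 1/s) * (real k + 1)) ^ d * q ^ k"
          using q0 s by (intro mult_mono mult_right_mono) (auto intro!: zero_le_power mult_nonneg_nonneg add_nonneg_nonneg)
        also have "\<dots> = (1 + 1/s) ^ d * ((real k + 1) ^ (d+1) * q ^ k)"
          by (simp add: power_mult_distrib mult_ac)
        also have "\<dots> \<le> (1 + 1/s) ^ d * V"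
          using V[of k] s q0 by (intro mult_left_mono) auto
        finally show "exp 1 * real k * (1 + real k / s) ^ d * q ^ k \<le> exp 1 * (1 + 1 / s) ^ d * V"
          by (simp add: mult_ac)
      qed (use A s in auto)
      also have "\<dots> \<le> G * b ^ k"
        unfolding G_def using A s by (intro mult_right_mono mult_left_mono) auto
      finally show ?thesis .
    qed
  qed
qed

lemma coef_growth:
  fixes f :: "complex \<Rightarrow> complex"
  assumes hol: "f holomorphic_on UNIV" and cb: "\<And>k. norm ((deriv ^^ k) f 0) \<le> M * b ^ k" and b: "b \<ge> 0"
  shows "norm (f z) \<le> M * exp (b * norm z)"
proof -
  have sums: "(\<lambda>n. (deriv ^^ n) f 0 / fact n * (z - 0) ^ n) sums f z"
    by (rule holomorphic_power_series[of f 0 "norm z + 1"]) (use hol in \<open>auto intro: holomorphic_on_subset\<close>)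
  have e: "(\<lambda>n. M * ((b * norm z) ^ n /\<^sub>R fact n)) sums (M * exp (b * norm z))"
    by (intro sums_mult exp_converges)
  have le: "norm ((deriv ^^ n) f 0 / fact n * (z - 0) ^ n) \<le> M * ((b * norm z) ^ n /\<^sub>R fact n)" for n
  proof -
    have "norm ((deriv ^^ n) f 0 / fact n * (z - 0) ^ n) = norm ((deriv ^^ n) f 0) * norm z ^ n / fact n"
      by (simp add: norm_mult norm_divide norm_power)
    also have "\<dots> \<le> (M * b ^ n) * norm z ^ n / fact n"
      by (intro divide_right_mono mult_right_mono cb) auto
    finally show ?thesis by (simp add: power_mult_distrib divide_simps mult_ac)
  qed
  have sn: "summable (\<lambda>n. norm ((deriv ^^ n) f 0 / fact n * (z - 0) ^ n))"
    by (rule summable_comparison_test[OF _ sums_summable[OF e]]) (use le in auto)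
  have "norm (f z) = norm (\<Sum>n. (deriv ^^ n) f 0 / fact n * (z - 0) ^ n)"
    using sums by (simp add: sums_iff)
  also have "\<dots> \<le> (\<Sum>n. norm ((deriv ^^ n) f 0 / fact n * (z - 0) ^ n))"
    by (rule summable_norm[OF sn])
  also have "\<dots> \<le> (\<Sum>n. M * ((b * norm z) ^ n /\<^sub>R fact n))"
    by (rule suminf_le[OF le sn sums_summable[OF e]])
  also have "\<dots> = M * exp (b * norm z)" using e by (simp add: sums_iff)
  finally show ?thesis .
qed

lemma Anorm_upper: "ereal (norm ((deriv ^^ k) f 0) / b ^ k) \<le> Anorm b f"
  unfolding Anorm_def by (rule SUP_upper) simp

lemma Anorm_le:
  assumes "\<And>k. norm ((deriv ^^ k) f 0) / b ^ k \<le> G"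
  shows "Anorm b f \<le> ereal G"
  unfolding Anorm_def by (rule SUP_least) (use assms in simp)

lemma Anorm_fin:
  assumes "Anorm b f < \<infinity>" "b > 0"
  shows "\<exists>M. \<forall>k. norm ((deriv ^^ k) f 0) \<le> M * b ^ k"
proof -
  have ge: "ereal (norm ((deriv ^^ k) f 0) / b ^ k) \<le> Anorm b f" for k by (rule Anorm_upper)
  have "Anorm b f \<ge> 0" using ge[of 0] by (rule order_trans[rotated]) simp
  with assms(1) obtain M where M: "Anorm b f = ereal M" by (cases "Anorm b f") auto
  have "norm ((deriv ^^ k) f 0) \<le> M * b ^ k" for k
    using ge[of k] assms(2) unfolding M by (simp add: divide_le_eq)
  thus ?thesis by blast
qed

definition Hyp :: "(nat \<Rightarrow> complex \<Rightarrow> complex) \<Rightarrow> (nat \<Rightarrow> complex) \<Rightarrow> (nat \<Rightarrow> nat) \<Rightarrow> (nat \<Rightarrow> real)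
    \<Rightarrow> (nat \<Rightarrow> nat \<Rightarrow> real) \<Rightarrow> (complex \<Rightarrow> complex) \<Rightarrow> bool" where
  "Hyp g C l \<alpha> \<beta> f \<longleftrightarrow> (\<forall>n. \<alpha> n \<ge> 0 \<and> (\<forall>j. \<beta> n j \<ge> 0 \<and> \<beta> n (Suc j) \<le> \<beta> n j) \<and> summable (\<beta> n)) \<and>
     (\<forall>n z. g n z = C n * z ^ l n * exp (of_real (\<alpha> n) * z) * (\<Prod>j. 1 + of_real (\<beta> n j) * z)) \<and>
     (\<forall>z. (\<lambda>n. g n z) \<longlonglongrightarrow> f z)"

lemma Hyp_subseq:
  assumes "Hyp g C l \<alpha> \<beta> f" "strict_mono \<phi>"
  shows "Hyp (\<lambda>n. g (\<phi> n)) (\<lambda>n. C (\<phi> n)) (\<lambda>n. l (\<phi> n)) (\<lambda>n. \<alpha> (\<phi> n)) (\<lambda>n. \<beta> (\<phi> n)) f"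
proof -
  have "(\<lambda>n. g (\<phi> n) z) \<longlonglongrightarrow> f z" for z
  proof -
    have "(\<lambda>n. g n z) \<longlonglongrightarrow> f z" using assms(1) unfolding Hyp_def by blast
    from LIMSEQ_subseq_LIMSEQ[OF this assms(2)] show ?thesis by (simp add: o_def)
  qed
  thus ?thesis using assms unfolding Hyp_def by auto
qed

lemma Hyp_shift:
  assumes "Hyp g C l \<alpha> \<beta> f"
  shows "Hyp (\<lambda>n. g (n + k)) (\<lambda>n. C (n + k)) (\<lambda>n. l (n + k)) (\<lambda>n. \<alpha> (n + k)) (\<lambda>n. \<beta> (n + k)) f"
  using Hyp_subseq[OF assms, of "\<lambda>n. n + k"] by (simp add: strict_mono_def)

lemma HypD:
  assumes "Hyp g C l \<alpha> \<beta> f"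
  shows "\<alpha> n \<ge> 0" "\<beta> n j \<ge> 0" "\<beta> n (Suc j) \<le> \<beta> n j" "summable (\<beta> n)"
    "g n z = C n * z ^ l n * exp (of_real (\<alpha> n) * z) * (\<Prod>j. 1 + of_real (\<beta> n j) * z)"
    "(\<lambda>n. g n z) \<longlonglongrightarrow> f z"
  using assms unfolding Hyp_def by auto

lemma norm_g_real:
  assumes H: "Hyp g C l \<alpha> \<beta> f" and "\<rho> \<ge> 0"
  shows "norm (g n (of_real \<rho>)) = norm (C n) * \<rho> ^ l n * exp (\<alpha> n * \<rho>) * RP (\<beta> n) \<rho>"
proof -
  have nn: "\<And>j. \<beta> n j \<ge> 0" and sm: "summable (\<beta> n)" using HypD[OF H] by auto
  have "g n (of_real \<rho>) = C n * of_real \<rho> ^ l n * exp (of_real (\<alpha> n) * of_real \<rho>) * of_real (RP (\<beta> n) \<rho>)"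
    using HypD(5)[OF H, of n "of_real \<rho>"] RP_lim(2)[OF nn sm, of \<rho>] by simp
  also have "exp (of_real (\<alpha> n) * of_real \<rho>) = (of_real (exp (\<alpha> n * \<rho>)) :: complex)"
    by (simp flip: exp_of_real)
  finally have "g n (of_real \<rho>) = C n * of_real (\<rho> ^ l n * exp (\<alpha> n * \<rho>) * RP (\<beta> n) \<rho>)"
    by simp
  moreover have "RP (\<beta> n) \<rho> \<ge> 0" using RP_ge1[OF nn sm \<open>\<rho> \<ge> 0\<close>] by simp
  ultimately show ?thesis using \<open>\<rho> \<ge> 0\<close> by (simp add: norm_mult norm_power abs_mult)
qed

lemma ratio_g:
  assumes H: "Hyp g C l \<alpha> \<beta> f" and "0 \<le> \<rho>1" "\<rho>1 \<le> \<rho>2" "0 < \<rho>2"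
  shows "norm (g n (of_real \<rho>1)) * (\<Prod>j<m. 1 + \<beta> n j * \<rho>2)
      \<le> norm (g n (of_real \<rho>2)) * (\<rho>1 / \<rho>2) ^ l n * (\<Prod>j<m. 1 + \<beta> n j * \<rho>1)"
proof -
  have nn: "\<And>j. \<beta> n j \<ge> 0" and sm: "summable (\<beta> n)" and a0: "\<alpha> n \<ge> 0" using HypD[OF H] by auto
  have R: "RP (\<beta> n) \<rho>1 * (\<Prod>j<m. 1 + \<beta> n j * \<rho>2) \<le> RP (\<beta> n) \<rho>2 * (\<Prod>j<m. 1 + \<beta> n j * \<rho>1)"
    by (rule RP_ratio[OF nn sm assms(2,3)])
  have e: "exp (\<alpha> n * \<rho>1) \<le> exp (\<alpha> n * \<rho>2)" using a0 assms by (simp add: mult_left_mono)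
  have p: "\<rho>1 ^ l n = \<rho>2 ^ l n * (\<rho>1 / \<rho>2) ^ l n" using assms by (simp add: power_divide)
  have "norm (g n (of_real \<rho>1)) * (\<Prod>j<m. 1 + \<beta> n j * \<rho>2)
      = (norm (C n) * \<rho>2 ^ l n * (\<rho>1 / \<rho>2) ^ l n) * exp (\<alpha> n * \<rho>1) * (RP (\<beta> n) \<rho>1 * (\<Prod>j<m. 1 + \<beta> n j * \<rho>2))"
    unfolding norm_g_real[OF H assms(2)] p by (simp add: mult_ac)
  also have "\<dots> \<le> (norm (C n) * \<rho>2 ^ l n * (\<rho>1 / \<rho>2) ^ l n) * exp (\<alpha> n * \<rho>2) * (RP (\<beta> n) \<rho>2 * (\<Prod>j<m. 1 + \<beta> n j * \<rho>1))"
  proof (rule mult_mono[OF mult_left_mono[OF e] R])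
    show "0 \<le> norm (C n) * \<rho>2 ^ l n * (\<rho>1 / \<rho>2) ^ l n" using assms by simp
    show "0 \<le> norm (C n) * \<rho>2 ^ l n * (\<rho>1 / \<rho>2) ^ l n * exp (\<alpha> n * \<rho>2)" using assms by simp
    show "0 \<le> RP (\<beta> n) \<rho>1 * (\<Prod>j<m. 1 + \<beta> n j * \<rho>2)"
      using RP_ge1[OF nn sm assms(2)] nn assms by (intro mult_nonneg_nonneg prod_nonneg) (auto intro!: add_nonneg_nonneg)
  qed
  also have "\<dots> = norm (g n (of_real \<rho>2)) * (\<rho>1 / \<rho>2) ^ l n * (\<Prod>j<m. 1 + \<beta> n j * \<rho>1)"
    unfolding norm_g_real[OF H order.strict_implies_order[OF assms(4)]] by (simp add: mult_ac)
  finally show ?thesis .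
qed

lemma not_flat:
  fixes c K \<rho>2 :: real
  assumes "c > 0" "\<rho>2 > 0" "\<And>\<rho>. 0 < \<rho> \<Longrightarrow> \<rho> \<le> \<rho>2 \<Longrightarrow> c * \<rho> ^ N \<le> K * \<rho> ^ (N + 1)"
  shows False
proof -
  define \<rho> where "\<rho> = min \<rho>2 (c / (2 * (\<bar>K\<bar> + 1)))"
  have r0: "\<rho> > 0" using assms by (simp add: \<rho>_def)
  have "c * \<rho> ^ N \<le> K * \<rho> ^ (N + 1)" using assms(3)[OF r0] by (simp add: \<rho>_def)
  hence "c \<le> K * \<rho>" using r0 by (simp add: power_add mult_ac)
  also have "K * \<rho> \<le> \<bar>K\<bar> * (c / (2 * (\<bar>K\<bar> + 1)))"
    using r0 by (intro order.trans[OF abs_ge_self[of "K * \<rho>", unfolded abs_mult]] mult_left_mono) (auto simp: \<rho>_def)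
  also have "\<dots> = (\<bar>K\<bar> / (\<bar>K\<bar> + 1)) * (c / 2)" by (simp add: field_simps)
  also have "\<dots> \<le> 1 * (c / 2)" using assms(1) by (intro mult_right_mono) auto
  also have "\<dots> < c" using assms(1) by simp
  finally show False by simp
qed

lemma valuation:
  assumes H: "Hyp g C l \<alpha> \<beta> f"
    and low: "c > 0" "\<delta> > 0" "\<And>\<rho>. 0 < \<rho> \<Longrightarrow> \<rho> < \<delta> \<Longrightarrow> c * \<rho> ^ N \<le> norm (f (of_real \<rho>))"
    and lL: "\<And>n. l n \<ge> L0"
    and div: "\<And>j. j < J \<Longrightarrow> filterlim (\<lambda>n. \<beta> n j) at_top sequentially"
  shows "L0 + J \<le> N"
proof (rule ccontr)
  assume "\<not> L0 + J \<le> N"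
  hence LJ: "N + 1 \<le> L0 + J" by simp
  define \<rho>2 where "\<rho>2 = \<delta> / 2"
  have r2: "\<rho>2 > 0" "\<rho>2 < \<delta>" using low by (auto simp: \<rho>2_def)
  show False
  proof (rule not_flat[OF low(1) r2(1)])
    fix \<rho> assume r: "0 < \<rho>" "\<rho> \<le> \<rho>2"
    define q where "q = \<rho> / \<rho>2"
    have q: "0 < q" "q \<le> 1" using r r2 by (auto simp: q_def)
    have ev: "eventually (\<lambda>n. norm (g n (of_real \<rho>)) * (\<Prod>j<J. (1 + \<beta> n j * \<rho>2) / (1 + \<beta> n j * \<rho>))
        \<le> norm (g n (of_real \<rho>2)) * q ^ L0) sequentially"
    proof (intro always_eventually allI)
      fix n
      have nn: "\<And>j. \<beta> n j \<ge> 0" using HypD[OF H] by auto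
      have pos: "(\<Prod>j<J. 1 + \<beta> n j * \<rho>) > 0" using nn r by (intro prod_pos) (auto intro: add_pos_nonneg)
      have "norm (g n (of_real \<rho>)) * (\<Prod>j<J. 1 + \<beta> n j * \<rho>2) \<le> norm (g n (of_real \<rho>2)) * q ^ l n * (\<Prod>j<J. 1 + \<beta> n j * \<rho>)"
        unfolding q_def by (rule ratio_g[OF H]) (use r r2 in auto)
      also have "q ^ l n \<le> q ^ L0" using q lL[of n] by (intro power_decreasing) auto
      hence "norm (g n (of_real \<rho>2)) * q ^ l n * (\<Prod>j<J. 1 + \<beta> n j * \<rho>) \<le> norm (g n (of_real \<rho>2)) * q ^ L0 * (\<Prod>j<J. 1 + \<beta> n j * \<rho>)"
        using pos by (intro mult_right_mono mult_left_mono) auto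
      finally have "norm (g n (of_real \<rho>)) * (\<Prod>j<J. 1 + \<beta> n j * \<rho>2) \<le> norm (g n (of_real \<rho>2)) * q ^ L0 * (\<Prod>j<J. 1 + \<beta> n j * \<rho>)" .
      thus "norm (g n (of_real \<rho>)) * (\<Prod>j<J. (1 + \<beta> n j * \<rho>2) / (1 + \<beta> n j * \<rho>)) \<le> norm (g n (of_real \<rho>2)) * q ^ L0"
        using pos by (simp add: prod_dividef divide_simps mult_ac)
    qed
    have lim1: "(\<lambda>n. (1 + \<beta> n j * \<rho>2) / (1 + \<beta> n j * \<rho>)) \<longlonglongrightarrow> \<rho>2 / \<rho>" if "j < J" for j
    proof -
      have inv: "(\<lambda>n. inverse (\<beta> n j)) \<longlonglongrightarrow> 0" by (rule tendsto_inverse_0_at_top[OF div[OF that]])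
      have "(\<lambda>n. (inverse (\<beta> n j) + \<rho>2) / (inverse (\<beta> n j) + \<rho>)) \<longlonglongrightarrow> (0 + \<rho>2) / (0 + \<rho>)"
        using r by (intro tendsto_intros inv) auto
      moreover have "eventually (\<lambda>n. (inverse (\<beta> n j) + \<rho>2) / (inverse (\<beta> n j) + \<rho>) = (1 + \<beta> n j * \<rho>2) / (1 + \<beta> n j * \<rho>)) sequentially"
        using filterlim_at_top_dense[THEN iffD1, OF div[OF that], rule_format, of 0]
      proof eventually_elim
        case (elim n)
        have "1 + \<beta> n j * \<rho> > 0" "1 + \<beta> n j * \<rho>2 > 0" using elim r r2 by (auto intro: add_pos_pos)
        hence "inverse (\<beta> n j) + \<rho>2 = (1 + \<beta> n j * \<rho>2) / \<beta> n j" "inverse (\<beta> n j) + \<rho> = (1 + \<beta> n j * \<rho>) / \<beta> n j"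
          using elim by (auto simp: field_simps)
        thus ?case using elim \<open>1 + \<beta> n j * \<rho> > 0\<close> by simp
      qed
      ultimately show ?thesis by (simp add: Lim_transform_eventually)
    qed
    have L: "(\<lambda>n. norm (g n (of_real \<rho>)) * (\<Prod>j<J. (1 + \<beta> n j * \<rho>2) / (1 + \<beta> n j * \<rho>)))
        \<longlonglongrightarrow> norm (f (of_real \<rho>)) * (\<Prod>j<J. \<rho>2 / \<rho>)"
      by (intro tendsto_intros HypD(6)[OF H] lim1) auto
    have R: "(\<lambda>n. norm (g n (of_real \<rho>2)) * q ^ L0) \<longlonglongrightarrow> norm (f (of_real \<rho>2)) * q ^ L0"
      by (intro tendsto_intros HypD(6)[OF H])
    have "norm (f (of_real \<rho>)) * (\<rho>2 / \<rho>) ^ J \<le> norm (f (of_real \<rho>2)) * q ^ L0"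
      using tendsto_le[OF _ R L ev] by simp
    hence "norm (f (of_real \<rho>)) \<le> norm (f (of_real \<rho>2)) * q ^ L0 * q ^ J"
      using r r2 by (simp add: q_def field_simps power_divide)
    also have "\<dots> = norm (f (of_real \<rho>2)) * q ^ (L0 + J)" by (simp add: power_add)
    also have "\<dots> \<le> norm (f (of_real \<rho>2)) * q ^ (N + 1)"
      using q LJ by (intro mult_left_mono power_decreasing) auto
    also have "\<dots> = (norm (f (of_real \<rho>2)) / \<rho>2 ^ (N+1)) * \<rho> ^ (N + 1)"
      by (simp add: q_def power_divide)
    finally have "norm (f (of_real \<rho>)) \<le> (norm (f (of_real \<rho>2)) / \<rho>2 ^ (N+1)) * \<rho> ^ (N + 1)" .
    moreover have "c * \<rho> ^ N \<le> norm (f (of_real \<rho>))" using low(3) r r2 by auto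
    ultimately show "c * \<rho> ^ N \<le> (norm (f (of_real \<rho>2)) / \<rho>2 ^ (N+1)) * \<rho> ^ (N + 1)" by simp
  qed
qed

lemma infinite_not_eventually:
  assumes "\<not> eventually P sequentially"
  shows "\<exists>\<phi>::nat\<Rightarrow>nat. strict_mono \<phi> \<and> (\<forall>i. \<not> P (\<phi> i))"
proof -
  have "frequently (\<lambda>n. \<not> P n) sequentially" using assms by (simp add: not_eventually)
  hence "infinite {n. \<not> P n}" by (simp add: frequently_cofinite[symmetric] cofinite_eq_sequentially)
  from infinite_enumerate[OF this] show ?thesis by blast
qed

lemma l_const:
  assumes H: "Hyp g C l \<alpha> \<beta> f"
    and low: "c > 0" "\<delta> > 0" "\<And>\<rho>. 0 < \<rho> \<Longrightarrow> \<rho> < \<delta> \<Longrightarrow> c * \<rho> ^ N \<le> norm (f (of_real \<rho>))"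
  shows "\<exists>(\<phi>::nat\<Rightarrow>nat) l0. strict_mono \<phi> \<and> (\<forall>i. l (\<phi> i) = l0)"
proof -
  have ev: "eventually (\<lambda>n. l n \<le> N) sequentially"
  proof (rule ccontr)
    assume "\<not> eventually (\<lambda>n. l n \<le> N) sequentially"
    from infinite_not_eventually[OF this] obtain \<phi> :: "nat \<Rightarrow> nat" where \<phi>: "strict_mono \<phi>" "\<And>i. \<not> l (\<phi> i) \<le> N" by blast
    have "N + 1 + 0 \<le> N"
      by (rule valuation[OF Hyp_subseq[OF H \<phi>(1)] low]) (use \<phi>(2) in \<open>auto simp: not_le Suc_le_eq\<close>)
    thus False by simp
  qed
  then obtain n0 where n0: "\<And>n. n \<ge> n0 \<Longrightarrow> l n \<le> N" by (auto simp: eventually_at_top_linorder)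
  have "\<exists>v. infinite {n. l n = v}"
  proof (rule ccontr)
    assume "\<not> (\<exists>v. infinite {n. l n = v})"
    hence fin: "finite {n. l n = v}" for v by blast
    have "{n0..} \<subseteq> (\<Union>v\<in>{..N}. {n. l n = v})" using n0 by auto
    moreover have "finite (\<Union>v\<in>{..N}. {n. l n = v})" using fin by auto
    ultimately have "finite {n0..}" by (rule finite_subset)
    thus False using infinite_Ici[of n0] by blast
  qed
  then obtain v where "infinite {n. l n = v}" by blast
  from infinite_enumerate[OF this] show ?thesis by auto
qed

lemma bdd_or_div:
  fixes u :: "nat \<Rightarrow> real"
  shows "(\<exists>(\<psi>::nat\<Rightarrow>nat) B. strict_mono \<psi> \<and> (\<forall>i. u (\<psi> i) \<le> B)) \<or> filterlim u at_top sequentially"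
proof (cases "filterlim u at_top sequentially")
  case False
  then obtain Z where "\<not> eventually (\<lambda>n. Z \<le> u n) sequentially" by (auto simp: filterlim_at_top)
  from infinite_not_eventually[OF this] obtain \<psi> :: "nat \<Rightarrow> nat" where "strict_mono \<psi>" "\<And>i. \<not> Z \<le> u (\<psi> i)" by blast
  hence "strict_mono \<psi> \<and> (\<forall>i. u (\<psi> i) \<le> Z)" by (auto simp: not_le less_imp_le)
  thus ?thesis by blast
qed simp

lemma J_select:
  assumes H: "Hyp g C l \<alpha> \<beta> f"
    and low: "c > 0" "\<delta> > 0" "\<And>\<rho>. 0 < \<rho> \<Longrightarrow> \<rho> < \<delta> \<Longrightarrow> c * \<rho> ^ N \<le> norm (f (of_real \<rho>))"
    and lc: "\<And>n. l n = l0"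
  shows "\<exists>(\<phi>::nat\<Rightarrow>nat) J B. strict_mono \<phi> \<and> (\<forall>j<J. filterlim (\<lambda>i. \<beta> (\<phi> i) j) at_top sequentially) \<and> (\<forall>i. \<beta> (\<phi> i) J \<le> B)"
proof -
  define Qs where "Qs = {J. \<exists>\<phi>::nat\<Rightarrow>nat. strict_mono \<phi> \<and> (\<forall>j<J. filterlim (\<lambda>i. \<beta> (\<phi> i) j) at_top sequentially)}"
  have sub: "Qs \<subseteq> {..N}"
  proof
    fix J assume "J \<in> Qs"
    then obtain \<phi> :: "nat \<Rightarrow> nat" where \<phi>: "strict_mono \<phi>" "\<And>j. j < J \<Longrightarrow> filterlim (\<lambda>i. \<beta> (\<phi> i) j) at_top sequentially"
      unfolding Qs_def by blast
    have "l0 + J \<le> N"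
      by (rule valuation[OF Hyp_subseq[OF H \<phi>(1)] low]) (use lc \<phi>(2) in auto)
    thus "J \<in> {..N}" by simp
  qed
  have fin: "finite Qs" using sub finite_subset by blast
  have "0 \<in> Qs" unfolding Qs_def by (auto intro!: exI[of _ id] simp: strict_mono_def)
  hence ne: "Qs \<noteq> {}" by blast
  define J where "J = Max Qs"
  have "J \<in> Qs" unfolding J_def using fin ne by (rule Max_in)
  then obtain \<phi> :: "nat \<Rightarrow> nat" where \<phi>: "strict_mono \<phi>" "\<And>j. j < J \<Longrightarrow> filterlim (\<lambda>i. \<beta> (\<phi> i) j) at_top sequentially"
    unfolding Qs_def by blast
  from bdd_or_div[of "\<lambda>i. \<beta> (\<phi> i) J"] show ?thesis
  proof
    assume "\<exists>(\<psi>::nat\<Rightarrow>nat) B. strict_mono \<psi> \<and> (\<forall>i. \<beta> (\<phi> (\<psi> i)) J \<le> B)"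
    then obtain \<psi> :: "nat \<Rightarrow> nat" and B where \<psi>: "strict_mono \<psi>" "\<And>i. \<beta> (\<phi> (\<psi> i)) J \<le> B" by blast
    have "strict_mono (\<phi> \<circ> \<psi>)" using \<phi>(1) \<psi>(1) by (rule strict_mono_o)
    moreover have "filterlim (\<lambda>i. \<beta> ((\<phi> \<circ> \<psi>) i) j) at_top sequentially" if "j < J" for j
      using filterlim_compose[OF \<phi>(2)[OF that] filterlim_subseq[OF \<psi>(1)]] by (simp add: o_def)
    ultimately show ?thesis using \<psi>(2) by (intro exI[of _ "\<phi> \<circ> \<psi>"] exI[of _ J] exI[of _ B]) auto
  next
    assume d: "filterlim (\<lambda>i. \<beta> (\<phi> i) J) at_top sequentially"
    have "Suc J \<in> Qs" unfolding Qs_def using \<phi> d by (auto intro!: exI[of _ \<phi>] simp: less_Suc_eq)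
    hence "Suc J \<le> J" unfolding J_def using fin by (simp add: Max_ge)
    thus ?thesis by simp
  qed
qed

lemma S_bound:
  assumes H: "Hyp g C l \<alpha> \<beta> f" and r0: "\<rho>0 > 0" and fnz: "f (of_real \<rho>0) \<noteq> 0"
    and Bj: "\<And>n j. J \<le> j \<Longrightarrow> \<beta> n j \<le> B" and B0: "B \<ge> 0" and lc: "\<And>n. l n = l0"
  shows "\<exists>SB KB. eventually (\<lambda>n. \<alpha> n + Tl (\<beta> n) J \<le> SB \<and> norm (C n * (\<Prod>j<J. of_real (\<beta> n j))) \<le> KB) sequentially"
proof -
  define \<rho>1 where "\<rho>1 = 2 * \<rho>0"
  define c where "c = \<rho>0 / (1 + B * \<rho>0)"
  have c0: "c > 0" unfolding c_def using r0 B0 by (auto intro!: divide_pos_pos add_pos_nonneg)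
  have cle: "c \<le> \<rho>0" unfolding c_def using r0 B0 by (simp add: divide_le_eq)
  define F0 where "F0 = norm (f (of_real \<rho>0))"
  define F1 where "F1 = norm (f (of_real \<rho>1))"
  have F0: "F0 > 0" using fnz by (simp add: F0_def)
  have r1: "\<rho>1 \<ge> 0" using r0 by (simp add: \<rho>1_def)
  have key: "norm (g n (of_real \<rho>0)) * (1 + c * (\<alpha> n + Tl (\<beta> n) J)) \<le> norm (g n (of_real \<rho>1))" for n
  proof -
    have nn: "\<And>j. \<beta> n j \<ge> 0" and sm: "summable (\<beta> n)" and a0: "\<alpha> n \<ge> 0" using HypD[OF H] by auto
    have T0: "Tl (\<beta> n) J \<ge> 0" by (rule Tl_nonneg[OF sm nn])
    have RPl: "RP (\<beta> n) \<rho>0 * (1 + (\<rho>1 - \<rho>0) / (1 + B * \<rho>0) * Tl (\<beta> n) J) \<le> RP (\<beta> n) \<rho>1"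
      by (rule RP_lower[OF nn sm _ B0]) (use Bj r0 in \<open>auto simp: \<rho>1_def\<close>)
    hence RPl': "RP (\<beta> n) \<rho>0 * (1 + c * Tl (\<beta> n) J) \<le> RP (\<beta> n) \<rho>1"
      by (simp add: c_def \<rho>1_def)
    have ex: "exp (\<alpha> n * \<rho>0) * (1 + c * \<alpha> n) \<le> exp (\<alpha> n * \<rho>1)"
    proof -
      have "c * \<alpha> n \<le> \<rho>0 * \<alpha> n" by (rule mult_right_mono[OF cle a0])
      hence "1 + c * \<alpha> n \<le> 1 + \<alpha> n * \<rho>0" by (simp add: mult.commute)
      also have "\<dots> \<le> exp (\<alpha> n * \<rho>0)" by (rule exp_ge_add_one_self)
      finally have "exp (\<alpha> n * \<rho>0) * (1 + c * \<alpha> n) \<le> exp (\<alpha> n * \<rho>0) * exp (\<alpha> n * \<rho>0)"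
        by (intro mult_left_mono) auto
      also have "\<dots> = exp (\<alpha> n * \<rho>1)" by (simp add: \<rho>1_def exp_add[symmetric] algebra_simps)
      finally show ?thesis .
    qed
    have pw: "\<rho>0 ^ l n \<le> \<rho>1 ^ l n" using r0 by (intro power_mono) (auto simp: \<rho>1_def)
    have RP0: "RP (\<beta> n) \<rho>0 \<ge> 0" using RP_ge1[OF nn sm] r0 by (smt (verit))
    have "norm (g n (of_real \<rho>0)) * (1 + c * (\<alpha> n + Tl (\<beta> n) J))
        \<le> norm (g n (of_real \<rho>0)) * ((1 + c * \<alpha> n) * (1 + c * Tl (\<beta> n) J))"
      using c0 a0 T0 by (intro mult_left_mono) (auto simp: algebra_simps)
    also have "\<dots> = norm (C n) * \<rho>0 ^ l n * (exp (\<alpha> n * \<rho>0) * (1 + c * \<alpha> n)) * (RP (\<beta> n) \<rho>0 * (1 + c * Tl (\<beta> n) J))"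
      unfolding norm_g_real[OF H order.strict_implies_order[OF r0]] by (simp add: mult_ac)
    also have "\<dots> \<le> norm (C n) * \<rho>1 ^ l n * exp (\<alpha> n * \<rho>1) * RP (\<beta> n) \<rho>1"
      using pw ex RPl' c0 a0 T0 RP0 r0 zero_le_power[OF r1, of "l n"]
      by (intro mult_mono) (auto intro!: mult_nonneg_nonneg)
    also have "\<dots> = norm (g n (of_real \<rho>1))"
      by (rule norm_g_real[OF H r1, symmetric])
    finally show ?thesis .
  qed
  have lowK: "norm (C n * (\<Prod>j<J. of_real (\<beta> n j))) * \<rho>0 ^ (l0 + J) \<le> norm (g n (of_real \<rho>0))" for n
  proof -
    have nn: "\<And>j. \<beta> n j \<ge> 0" and sm: "summable (\<beta> n)" and a0: "\<alpha> n \<ge> 0" using HypD[OF H] by auto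
    have "(\<Prod>j<J. \<beta> n j) * \<rho>0 ^ J = (\<Prod>j<J. \<beta> n j * \<rho>0)" by (simp add: prod.distrib)
    also have "\<dots> \<le> (\<Prod>j<J. 1 + \<beta> n j * \<rho>0)" using nn r0 by (intro prod_mono) auto
    also have "\<dots> \<le> RP (\<beta> n) \<rho>0" using r0 by (intro RP_ge[OF nn sm]) auto
    finally have P: "(\<Prod>j<J. \<beta> n j) * \<rho>0 ^ J \<le> RP (\<beta> n) \<rho>0" .
    have "norm (C n * (\<Prod>j<J. of_real (\<beta> n j))) = norm (C n) * (\<Prod>j<J. \<beta> n j)"
      using nn by (simp add: norm_mult prod_norm[symmetric])
    hence "norm (C n * (\<Prod>j<J. of_real (\<beta> n j))) * \<rho>0 ^ (l0 + J) = norm (C n) * \<rho>0 ^ l0 * 1 * ((\<Prod>j<J. \<beta> n j) * \<rho>0 ^ J)"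
      by (simp add: power_add mult_ac)
    also have "\<dots> \<le> norm (C n) * \<rho>0 ^ l0 * exp (\<alpha> n * \<rho>0) * RP (\<beta> n) \<rho>0"
      using P a0 r0 nn by (intro mult_mono mult_left_mono) (auto intro!: prod_nonneg mult_nonneg_nonneg)
    also have "\<dots> = norm (g n (of_real \<rho>0))"
      unfolding norm_g_real[OF H order.strict_implies_order[OF r0]] lc ..
    finally show ?thesis .
  qed
  have t0: "(\<lambda>n. norm (g n (of_real \<rho>0))) \<longlonglongrightarrow> F0" unfolding F0_def by (intro tendsto_intros HypD(6)[OF H])
  have t1: "(\<lambda>n. norm (g n (of_real \<rho>1))) \<longlonglongrightarrow> F1" unfolding F1_def by (intro tendsto_intros HypD(6)[OF H])
  have e0: "eventually (\<lambda>n. norm (g n (of_real \<rho>0)) > F0 / 2) sequentially"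
    using order_tendstoD(1)[OF t0, of "F0 / 2"] F0 by simp
  have e0': "eventually (\<lambda>n. norm (g n (of_real \<rho>0)) < F0 + 1) sequentially"
    using order_tendstoD(2)[OF t0] by simp
  have e1: "eventually (\<lambda>n. norm (g n (of_real \<rho>1)) < F1 + 1) sequentially"
    using order_tendstoD(2)[OF t1] by simp
  define SB where "SB = ((F1 + 1) / (F0 / 2) - 1) / c"
  define KB where "KB = (F0 + 1) / \<rho>0 ^ (l0 + J)"
  have "eventually (\<lambda>n. \<alpha> n + Tl (\<beta> n) J \<le> SB \<and> norm (C n * (\<Prod>j<J. of_real (\<beta> n j))) \<le> KB) sequentially"
    using e0 e0' e1
  proof eventually_elim
    case (elim n)
    have T0: "\<alpha> n + Tl (\<beta> n) J \<ge> 0" using HypD[OF H, of n] Tl_nonneg[of "\<beta> n" J] by (auto intro: add_nonneg_nonneg)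
    have "F0 / 2 * (1 + c * (\<alpha> n + Tl (\<beta> n) J)) \<le> norm (g n (of_real \<rho>0)) * (1 + c * (\<alpha> n + Tl (\<beta> n) J))"
      using elim c0 T0 by (intro mult_right_mono) auto
    also have "\<dots> \<le> F1 + 1" using key[of n] elim by simp
    finally have "1 + c * (\<alpha> n + Tl (\<beta> n) J) \<le> (F1 + 1) / (F0 / 2)"
      using F0 by (simp add: field_simps)
    hence A: "\<alpha> n + Tl (\<beta> n) J \<le> SB" unfolding SB_def using c0 by (simp add: field_simps)
    have "norm (C n * (\<Prod>j<J. of_real (\<beta> n j))) * \<rho>0 ^ (l0 + J) \<le> F0 + 1"
      using lowK[of n] elim by simp
    hence "norm (C n * (\<Prod>j<J. of_real (\<beta> n j))) \<le> KB" unfolding KB_def using r0 by (simp add: field_simps)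
    with A show ?case by simp
  qed
  thus ?thesis by blast
qed

lemma prod_split_shift:
  fixes f :: "nat \<Rightarrow> 'a::comm_monoid_mult"
  shows "(\<Prod>j<J+M. f j) = (\<Prod>j<J. f j) * (\<Prod>i<M. f (J+i))"
  by (induction M) (simp_all add: mult_ac)

lemma sum_split_shift:
  fixes f :: "nat \<Rightarrow> 'a::comm_monoid_add"
  shows "(\<Sum>j<J+M. f j) = (\<Sum>j<J. f j) + (\<Sum>i<M. f (J+i))"
  by (induction M) (simp_all add: add_ac)

lemma Tl_shift: "Tl \<beta> (J + M) = Tl \<beta> J - (\<Sum>i<M. \<beta> (J+i))"
  unfolding Tl_def sum_split_shift by simp

lemma prod_K_identity:
  fixes \<beta> :: "nat \<Rightarrow> real" and z :: complex
  assumes "\<And>j. j < J \<Longrightarrow> \<beta> j \<noteq> 0"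
  shows "(\<Prod>j<J. 1 + of_real (\<beta> j) * z) = (\<Prod>j<J. of_real (\<beta> j)) * (\<Prod>j<J. z + of_real (inverse (\<beta> j)))"
proof -
  have "(\<Prod>j<J. 1 + of_real (\<beta> j) * z) = (\<Prod>j<J. of_real (\<beta> j) * (z + of_real (inverse (\<beta> j))))"
  proof (rule prod.cong)
    fix j assume "j \<in> {..<J}"
    hence "\<beta> j \<noteq> 0" using assms by auto
    thus "1 + of_real (\<beta> j) * z = of_real (\<beta> j) * (z + of_real (inverse (\<beta> j)))"
      by (simp add: algebra_simps of_real_inverse)
  qed simp
  thus ?thesis by (simp add: prod.distrib)
qed

lemma norm_prod_le_exp:
  fixes b :: "nat \<Rightarrow> real" and z :: complex
  assumes "\<And>i. b i \<ge> 0"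
  shows "(\<Prod>i<M. norm (1 + of_real (b i) * z)) \<le> exp (norm z * (\<Sum>i<M. b i))"
proof -
  have "(\<Prod>i<M. norm (1 + of_real (b i) * z)) \<le> (\<Prod>i<M. exp (b i * norm z))"
  proof (rule prod_mono, safe)
    fix j
    have "norm (1 + of_real (b j) * z) \<le> 1 + b j * norm z"
      using assms[of j] by (metis norm_one norm_triangle_ineq norm_mult norm_of_real abs_of_nonneg)
    also have "\<dots> \<le> exp (b j * norm z)" by (rule exp_ge_add_one_self)
    finally show "norm (1 + of_real (b j) * z) \<le> exp (b j * norm z)" .
  qed auto
  also have "\<dots> = exp (norm z * (\<Sum>i<M. b i))"
    by (simp add: exp_sum sum_distrib_left mult.commute)
  finally show ?thesis .
qed

lemma rep_limit:
  assumes H: "Hyp g C l \<alpha> \<beta> f"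
    and lc: "\<And>n. l n = l0"
    and div: "\<And>j. j < J \<Longrightarrow> filterlim (\<lambda>n. \<beta> n j) at_top sequentially"
    and K_lim: "(\<lambda>n. C n * (\<Prod>j<J. of_real (\<beta> n j))) \<longlonglongrightarrow> K"
    and a_lim: "\<alpha> \<longlonglongrightarrow> \<alpha>'"
    and T_lim: "(\<lambda>n. Tl (\<beta> n) J) \<longlonglongrightarrow> T"
    and b_lim: "\<And>i. (\<lambda>n. \<beta> n (J+i)) \<longlonglongrightarrow> b i"
  shows "(\<forall>i. b i \<ge> 0 \<and> b (Suc i) \<le> b i) \<and> summable b \<and> (\<Sum>i. b i) \<le> T \<and> \<alpha>' \<ge> 0 \<and>
    (\<forall>z. f z = K * z ^ (l0 + J) * exp (of_real (\<alpha>' + T - (\<Sum>i. b i)) * z) * (\<Prod>i. 1 + of_real (b i) * z))"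
proof -
  have b0: "b i \<ge> 0" for i
    by (rule LIMSEQ_le_const[OF b_lim]) (use HypD(2)[OF H] in auto)
  have bdec: "b (Suc i) \<le> b i" for i
  proof (rule LIMSEQ_le[OF b_lim b_lim])
    show "\<exists>N. \<forall>n\<ge>N. \<beta> n (J + Suc i) \<le> \<beta> n (J + i)" using HypD(3)[OF H] by auto
  qed
  have a0: "\<alpha>' \<ge> 0" by (rule LIMSEQ_le_const[OF a_lim]) (use HypD(1)[OF H] in auto)
  have psum: "(\<Sum>i<M. b i) \<le> T" for M
  proof (rule LIMSEQ_le[OF tendsto_sum[OF b_lim] T_lim])
    show "\<exists>N. \<forall>n\<ge>N. (\<Sum>i<M. \<beta> n (J + i)) \<le> Tl (\<beta> n) J"
    proof (intro exI allI impI)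
      fix n
      have "Tl (\<beta> n) (J + M) \<ge> 0" using HypD[OF H, of n] by (intro Tl_nonneg) auto
      thus "(\<Sum>i<M. \<beta> n (J + i)) \<le> Tl (\<beta> n) J" unfolding Tl_shift by simp
    qed
  qed
  have smb: "summable b" by (rule summableI_nonneg_bounded[OF b0 psum])
  have sumle: "(\<Sum>i. b i) \<le> T" by (rule suminf_le_const[OF smb psum])
  define TM where "TM M = T - (\<Sum>i<M. b i)" for M
  have TM0: "TM M \<ge> 0" for M using psum[of M] by (simp add: TM_def)
  have TMT: "TM M \<le> T" for M using b0 by (simp add: TM_def sum_nonneg)
  have T0: "T \<ge> 0" using TM0[of 0] by (simp add: TM_def)
  have rep: "f z = K * z ^ (l0 + J) * exp (of_real (\<alpha>' + T - (\<Sum>i. b i)) * z) * (\<Prod>i. 1 + of_real (b i) * z)" for z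
  proof -
    define E where "E M = K * z ^ l0 * exp (of_real \<alpha>' * z) * z ^ J * (\<Prod>i<M. 1 + of_real (b i) * z) * exp (z * of_real (TM M))" for M
    define D where "D = norm K * norm z ^ l0 * norm (exp (of_real \<alpha>' * z)) * norm z ^ J * exp (norm z * T) * (norm z ^ 2 * T * exp (2 * norm z * T))"
    have ineqM: "norm (f z - E M) \<le> norm K * norm z ^ l0 * norm (exp (of_real \<alpha>' * z)) * norm z ^ J * (\<Prod>i<M. norm (1 + of_real (b i) * z))
        * (norm z ^ 2 * b M * TM M * exp (2 * norm z * TM M))" for M
    proof -
      define Kn where "Kn n = C n * (\<Prod>j<J. of_real (\<beta> n j))" for n
      define Pinv where "Pinv n = (\<Prod>j<J. z + of_real (inverse (\<beta> n j)))" for n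
      define Pm where "Pm n = (\<Prod>i<M. 1 + of_real (\<beta> n (J+i)) * z)" for n
      define Pmn where "Pmn n = (\<Prod>i<M. norm (1 + of_real (\<beta> n (J+i)) * z))" for n
      define Tm where "Tm n = Tl (\<beta> n) J - (\<Sum>i<M. \<beta> n (J+i))" for n
      define LHS where "LHS n = norm (g n z - Kn n * z ^ l0 * exp (of_real (\<alpha> n) * z) * Pinv n * Pm n * exp (z * of_real (Tm n)))" for n
      define RHS where "RHS n = norm (Kn n) * norm z ^ l0 * norm (exp (of_real (\<alpha> n) * z)) * norm (Pinv n) * Pmn n
          * (norm z ^ 2 * \<beta> n (J+M) * Tm n * exp (2 * norm z * Tm n))" for n
      have inv0: "(\<lambda>n. (of_real (inverse (\<beta> n j)) :: complex)) \<longlonglongrightarrow> 0" if "j \<in> {..<J}" for j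
      proof -
        have "(\<lambda>n. inverse (\<beta> n j)) \<longlonglongrightarrow> 0" using that by (intro tendsto_inverse_0_at_top div) auto
        hence "(\<lambda>n. (of_real (inverse (\<beta> n j)) :: complex)) \<longlonglongrightarrow> of_real 0" by (rule tendsto_of_real)
        thus ?thesis by (simp only: of_real_0)
      qed
      have Pinv_lim: "Pinv \<longlonglongrightarrow> z ^ J"
      proof -
        have "Pinv \<longlonglongrightarrow> (\<Prod>j<J. z + 0)" unfolding Pinv_def
          by (intro tendsto_prod tendsto_add tendsto_const inv0)
        thus ?thesis by simp
      qed
      have Pm_lim: "Pm \<longlonglongrightarrow> (\<Prod>i<M. 1 + of_real (b i) * z)" unfolding Pm_def
        by (intro tendsto_prod tendsto_intros b_lim)
      have Pmn_lim: "Pmn \<longlonglongrightarrow> (\<Prod>i<M. norm (1 + of_real (b i) * z))" unfolding Pmn_def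
        by (intro tendsto_prod tendsto_intros b_lim)
      have Tm_lim: "Tm \<longlonglongrightarrow> TM M" unfolding Tm_def TM_def
        by (intro tendsto_intros T_lim b_lim)
      have Kn_lim: "Kn \<longlonglongrightarrow> K" unfolding Kn_def by (rule K_lim)
      have LHS_lim: "LHS \<longlonglongrightarrow> norm (f z - E M)"
        unfolding LHS_def E_def
        by (intro tendsto_intros HypD(6)[OF H] Kn_lim Pinv_lim Pm_lim Tm_lim a_lim)
      have RHS_lim: "RHS \<longlonglongrightarrow> norm K * norm z ^ l0 * norm (exp (of_real \<alpha>' * z)) * norm (z ^ J) * (\<Prod>i<M. norm (1 + of_real (b i) * z))
        * (norm z ^ 2 * b M * TM M * exp (2 * norm z * TM M))"
        unfolding RHS_def
        by (intro tendsto_intros Kn_lim Pinv_lim Pmn_lim Tm_lim a_lim b_lim)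
      have ev: "eventually (\<lambda>n. \<forall>j\<in>{..<J}. \<beta> n j > 0) sequentially"
        by (intro eventually_ball_finite ballI) (use div in \<open>auto simp: filterlim_at_top_dense\<close>)
      have "eventually (\<lambda>n. LHS n \<le> RHS n) sequentially"
        using ev
      proof eventually_elim
        case (elim n)
        have nn: "\<And>j. \<beta> n j \<ge> 0" and dec: "\<And>j. \<beta> n (Suc j) \<le> \<beta> n j" and sm: "summable (\<beta> n)"
          using HypD[OF H] by auto
        define P where "P = (\<Prod>j. 1 + of_real (\<beta> n j) * z)"
        define Q where "Q = (\<Prod>j<J+M. 1 + of_real (\<beta> n j) * z)"
        have ti: "norm (P - Q * exp (z * of_real (Tl (\<beta> n) (J+M))))
          \<le> (\<Prod>j<J+M. norm (1 + of_real (\<beta> n j) * z)) * ((norm z)^2 * \<beta> n (J+M) * Tl (\<beta> n) (J+M) * exp (2 * norm z * Tl (\<beta> n) (J+M)))"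
          unfolding P_def Q_def by (rule tail_inf[OF nn dec sm])
        have nz: "\<And>j. j < J \<Longrightarrow> \<beta> n j \<noteq> 0" using elim by (metis lessThan_iff less_irrefl)
        have PK: "(\<Prod>j<J. 1 + of_real (\<beta> n j) * z) = (\<Prod>j<J. of_real (\<beta> n j)) * Pinv n"
          unfolding Pinv_def by (rule prod_K_identity) (use nz in auto)
        have CQ: "C n * Q = Kn n * Pinv n * Pm n"
          unfolding Q_def prod_split_shift PK Kn_def Pm_def by (simp only: mult_ac)
        have CQn: "norm (C n) * (\<Prod>j<J+M. norm (1 + of_real (\<beta> n j) * z)) = norm (Kn n) * norm (Pinv n) * Pmn n"
        proof -
          have "norm (C n) * (\<Prod>j<J+M. norm (1 + of_real (\<beta> n j) * z)) = norm (C n * Q)"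
            unfolding Q_def by (simp add: norm_mult prod_norm)
          also have "\<dots> = norm (Kn n) * norm (Pinv n) * Pmn n"
            unfolding CQ Pm_def Pmn_def by (simp add: norm_mult prod_norm)
          finally show ?thesis .
        qed
        have TT: "Tl (\<beta> n) (J+M) = Tm n" unfolding Tm_def Tl_shift ..
        have gz: "g n z = C n * z ^ l0 * exp (of_real (\<alpha> n) * z) * P"
          unfolding P_def using HypD(5)[OF H, of n z] lc[of n] by simp
        have "g n z - Kn n * z ^ l0 * exp (of_real (\<alpha> n) * z) * Pinv n * Pm n * exp (z * of_real (Tm n))
            = (C n * z ^ l0 * exp (of_real (\<alpha> n) * z)) * (P - Q * exp (z * of_real (Tl (\<beta> n) (J+M))))"
        proof -
          have "Kn n * z ^ l0 * exp (of_real (\<alpha> n) * z) * Pinv n * Pm n * exp (z * of_real (Tm n))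
              = (Kn n * Pinv n * Pm n) * (z ^ l0 * exp (of_real (\<alpha> n) * z) * exp (z * of_real (Tm n)))"
            by (simp only: mult_ac)
          also have "\<dots> = (C n * Q) * (z ^ l0 * exp (of_real (\<alpha> n) * z) * exp (z * of_real (Tm n)))"
            by (simp only: CQ)
          also have "\<dots> = (C n * z ^ l0 * exp (of_real (\<alpha> n) * z)) * (Q * exp (z * of_real (Tm n)))"
            by (simp only: mult_ac)
          finally have "Kn n * z ^ l0 * exp (of_real (\<alpha> n) * z) * Pinv n * Pm n * exp (z * of_real (Tm n))
              = (C n * z ^ l0 * exp (of_real (\<alpha> n) * z)) * (Q * exp (z * of_real (Tm n)))" .
          thus ?thesis unfolding gz TT by (simp add: right_diff_distrib)
        qed
        hence "LHS n = norm (C n) * norm z ^ l0 * norm (exp (of_real (\<alpha> n) * z)) * norm (P - Q * exp (z * of_real (Tl (\<beta> n) (J+M))))"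
          unfolding LHS_def by (simp add: norm_mult norm_power)
        also have "\<dots> \<le> norm (C n) * norm z ^ l0 * norm (exp (of_real (\<alpha> n) * z)) *
            ((\<Prod>j<J+M. norm (1 + of_real (\<beta> n j) * z)) * ((norm z)^2 * \<beta> n (J+M) * Tl (\<beta> n) (J+M) * exp (2 * norm z * Tl (\<beta> n) (J+M))))"
          by (intro mult_left_mono ti) auto
        also have "\<dots> = (norm (C n) * (\<Prod>j<J+M. norm (1 + of_real (\<beta> n j) * z))) *
            (norm z ^ l0 * norm (exp (of_real (\<alpha> n) * z)) * ((norm z)^2 * \<beta> n (J+M) * Tm n * exp (2 * norm z * Tm n)))"
          unfolding TT by (simp only: mult_ac)
        also have "\<dots> = (norm (Kn n) * norm (Pinv n) * Pmn n) *
            (norm z ^ l0 * norm (exp (of_real (\<alpha> n) * z)) * ((norm z)^2 * \<beta> n (J+M) * Tm n * exp (2 * norm z * Tm n)))"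
          by (simp only: CQn)
        also have "\<dots> = RHS n"
          unfolding RHS_def by (simp only: mult_ac)
        finally show ?case .
      qed
      from tendsto_le[OF _ RHS_lim LHS_lim this] show ?thesis by (simp add: norm_power)
    qed
    have ineqD: "norm (f z - E M) \<le> D * b M" for M
    proof -
      have p: "(\<Prod>i<M. norm (1 + of_real (b i) * z)) \<le> exp (norm z * T)"
        using norm_prod_le_exp[where b=b and M=M and z=z, OF b0] psum[of M] by (smt (verit) exp_le_cancel_iff mult_left_mono norm_ge_zero)
      have q: "norm z ^ 2 * b M * TM M * exp (2 * norm z * TM M) \<le> norm z ^ 2 * T * exp (2 * norm z * T) * b M"
      proof -
        have "exp (2 * norm z * TM M) \<le> exp (2 * norm z * T)" using TMT[of M] by (simp add: mult_left_mono)
        hence "TM M * exp (2 * norm z * TM M) \<le> T * exp (2 * norm z * T)"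
          using TM0[of M] TMT[of M] by (intro mult_mono) auto
        hence "norm z ^ 2 * b M * (TM M * exp (2 * norm z * TM M)) \<le> norm z ^ 2 * b M * (T * exp (2 * norm z * T))"
          using b0[of M] by (intro mult_left_mono) auto
        thus ?thesis by (simp add: mult_ac)
      qed
      have "norm (f z - E M) \<le> norm K * norm z ^ l0 * norm (exp (of_real \<alpha>' * z)) * norm z ^ J * (\<Prod>i<M. norm (1 + of_real (b i) * z))
        * (norm z ^ 2 * b M * TM M * exp (2 * norm z * TM M))" by (rule ineqM)
      also have "\<dots> \<le> norm K * norm z ^ l0 * norm (exp (of_real \<alpha>' * z)) * norm z ^ J * exp (norm z * T)
        * (norm z ^ 2 * T * exp (2 * norm z * T) * b M)"
      proof (rule mult_mono[OF mult_left_mono[OF p] q])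
        show "0 \<le> norm K * norm z ^ l0 * norm (exp (of_real \<alpha>' * z)) * norm z ^ J" by simp
        show "0 \<le> norm K * norm z ^ l0 * norm (exp (of_real \<alpha>' * z)) * norm z ^ J * exp (norm z * T)" by simp
        show "0 \<le> norm z ^ 2 * b M * TM M * exp (2 * norm z * TM M)" using b0[of M] TM0[of M] by simp
      qed
      also have "\<dots> = D * b M" unfolding D_def by (simp add: mult_ac)
      finally show ?thesis .
    qed
    have E_lim: "E \<longlonglongrightarrow> K * z ^ l0 * exp (of_real \<alpha>' * z) * z ^ J * (\<Prod>i. 1 + of_real (b i) * z) * exp (z * of_real (T - (\<Sum>i. b i)))"
      unfolding E_def TM_def
      by (intro tendsto_intros prod_lim b0 smb summable_LIMSEQ)
    have bM: "b \<longlonglongrightarrow> 0" by (rule summable_LIMSEQ_zero[OF smb])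
    have "norm (f z - K * z ^ l0 * exp (of_real \<alpha>' * z) * z ^ J * (\<Prod>i. 1 + of_real (b i) * z) * exp (z * of_real (T - (\<Sum>i. b i)))) \<le> D * 0"
    proof (rule tendsto_le[OF _ tendsto_mult[OF tendsto_const bM]])
      show "(\<lambda>M. norm (f z - E M)) \<longlonglongrightarrow> norm (f z - K * z ^ l0 * exp (of_real \<alpha>' * z) * z ^ J * (\<Prod>i. 1 + of_real (b i) * z) * exp (z * of_real (T - (\<Sum>i. b i))))"
        by (intro tendsto_intros E_lim)
      show "eventually (\<lambda>M. norm (f z - E M) \<le> D * b M) sequentially" using ineqD by simp
    qed simp
    hence "f z = K * z ^ l0 * exp (of_real \<alpha>' * z) * z ^ J * (\<Prod>i. 1 + of_real (b i) * z) * exp (z * of_real (T - (\<Sum>i. b i)))"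
      by simp
    also have "\<dots> = K * z ^ (l0 + J) * (exp (of_real \<alpha>' * z) * exp (z * of_real (T - (\<Sum>i. b i)))) * (\<Prod>i. 1 + of_real (b i) * z)"
      by (simp add: power_add mult_ac)
    also have "exp (of_real \<alpha>' * z) * exp (z * of_real (T - (\<Sum>i. b i))) = exp (of_real (\<alpha>' + T - (\<Sum>i. b i)) * z)"
      by (simp add: exp_add[symmetric] algebra_simps)
    finally show ?thesis .
  qed
  show ?thesis using b0 bdec smb sumle a0 rep by blast
qed

lemma cont_lower:
  fixes h :: "complex \<Rightarrow> complex"
  assumes "isCont h 0" "h 0 \<noteq> 0"
  shows "\<exists>d>0. \<forall>w. norm w < d \<longrightarrow> norm (h 0) / 2 \<le> norm (h w)"
proof -
  have "(h \<longlongrightarrow> h 0) (at 0)" using assms(1) by (simp add: isCont_def)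
  hence "eventually (\<lambda>w. dist (h w) (h 0) < norm (h 0) / 2) (at 0)"
    using assms(2) by (intro tendstoD) auto
  then obtain d where d: "d > 0" "\<And>w. w \<noteq> 0 \<Longrightarrow> dist w 0 < d \<Longrightarrow> dist (h w) (h 0) < norm (h 0) / 2"
    unfolding eventually_at by blast
  have "norm (h 0) / 2 \<le> norm (h w)" if "norm w < d" for w
  proof (cases "w = 0")
    case False
    hence "dist (h w) (h 0) < norm (h 0) / 2" using d that by auto
    hence "norm (h w - h 0) < norm (h 0) / 2" by (simp add: dist_norm)
    moreover have "norm (h 0) \<le> norm (h w) + norm (h w - h 0)"
      using norm_triangle_sub[of "h 0" "h w"] by (simp add: norm_minus_commute)
    ultimately show ?thesis by simp
  qed simp
  thus ?thesis using d(1) by blast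
qed

lemma order_lower:
  fixes f :: "complex \<Rightarrow> complex"
  assumes hol: "f holomorphic_on UNIV" and nz: "\<exists>z. f z \<noteq> 0"
  shows "\<exists>N c \<delta>. c > 0 \<and> \<delta> > 0 \<and> (\<forall>\<rho>. 0 < \<rho> \<and> \<rho> < \<delta> \<longrightarrow> c * \<rho> ^ N \<le> norm (f (of_real \<rho>)))"
proof (cases "f 0 = 0")
  case False
  have "isCont f 0" using holomorphic_on_imp_continuous_on[OF hol]
    by (metis continuous_on_eq_continuous_at open_UNIV UNIV_I)
  from cont_lower[OF this False] obtain d where d: "d > 0" "\<And>w. norm w < d \<Longrightarrow> norm (f 0) / 2 \<le> norm (f w)" by blast
  show ?thesis
    by (rule exI[of _ 0], rule exI[of _ "norm (f 0) / 2"], rule exI[of _ d]) (use False d in auto)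
next
  case True
  have nc: "\<not> f constant_on UNIV"
  proof
    assume "f constant_on UNIV"
    then obtain c where "\<And>z. f z = c" unfolding constant_on_def by auto
    with True nz show False by auto
  qed
  obtain n r g where gr: "0 < n" "0 < r" "ball 0 r \<subseteq> UNIV" "g holomorphic_on ball 0 r"
      "\<And>w. w \<in> ball 0 r \<Longrightarrow> f w = (w - 0) ^ n * g w" "\<And>w. w \<in> ball 0 r \<Longrightarrow> g w \<noteq> 0"
    by (rule holomorphic_factor_zero_nonconstant[OF hol open_UNIV connected_UNIV UNIV_I True nc]) blast
  have "continuous_on (ball 0 r) g" by (rule holomorphic_on_imp_continuous_on[OF gr(4)])
  hence "isCont g 0" using gr(2) by (simp add: continuous_on_eq_continuous_at)
  from cont_lower[OF this gr(6)] obtain d where d: "d > 0" "\<And>w. norm w < d \<Longrightarrow> norm (g 0) / 2 \<le> norm (g w)"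
    using gr(2) by auto
  have g0: "g 0 \<noteq> 0" using gr(6) gr(2) by auto
  have "0 < norm (g 0) / 2 \<and> 0 < min r d \<and> (\<forall>\<rho>. 0 < \<rho> \<and> \<rho> < min r d \<longrightarrow> norm (g 0) / 2 * \<rho> ^ n \<le> norm (f (of_real \<rho>)))"
  proof (intro conjI allI impI)
    fix \<rho> :: real assume r: "0 < \<rho> \<and> \<rho> < min r d"
    have "f (of_real \<rho>) = (of_real \<rho>) ^ n * g (of_real \<rho>)" using gr(5)[of "of_real \<rho>"] r by simp
    hence "norm (f (of_real \<rho>)) = \<rho> ^ n * norm (g (of_real \<rho>))" using r by (simp add: norm_mult norm_power)
    moreover have "norm (g 0) / 2 \<le> norm (g (of_real \<rho>))" using d(2)[of "of_real \<rho>"] r by simp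
    ultimately show "norm (g 0) / 2 * \<rho> ^ n \<le> norm (f (of_real \<rho>))"
      using r by (simp add: mult.commute mult_left_mono)
  qed (use g0 gr d in auto)
  thus ?thesis by blast
qed

lemma Laguerre_Hyp:
  assumes gL: "\<And>n. g n \<in> Laguerre" and conv: "\<And>z. (\<lambda>n. g n z) \<longlonglongrightarrow> f z"
  shows "\<exists>C l \<alpha> \<beta>. Hyp g C l \<alpha> \<beta> f"
proof -
  define P where "P n C l \<alpha> \<beta> \<longleftrightarrow> (\<alpha>::real) \<ge> 0 \<and> (\<forall>j. (\<beta>::nat\<Rightarrow>real) j \<ge> \<beta> (Suc j) \<and> \<beta> (Suc j) \<ge> 0) \<and> summable \<beta> \<and>
      (\<forall>z. g n z = C * z ^ l * exp (of_real \<alpha> * z) * (\<Prod>j. 1 + of_real (\<beta> j) * z))" for n C l \<alpha> \<beta>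
  have h0: "\<forall>n. \<exists>C l \<alpha> \<beta>. P n C l \<alpha> \<beta>"
    using gL unfolding Laguerre_def P_def by blast
  from choice[OF h0] obtain C where h1: "\<forall>n. \<exists>l \<alpha> \<beta>. P n (C n) l \<alpha> \<beta>" ..
  from choice[OF h1] obtain l where h2: "\<forall>n. \<exists>\<alpha> \<beta>. P n (C n) (l n) \<alpha> \<beta>" ..
  from choice[OF h2] obtain \<alpha> where h3: "\<forall>n. \<exists>\<beta>. P n (C n) (l n) (\<alpha> n) \<beta>" ..
  from choice[OF h3] obtain \<beta> where h4: "\<forall>n. P n (C n) (l n) (\<alpha> n) (\<beta> n)" ..
  have nn: "\<beta> n j \<ge> 0" for n j
  proof (cases j)
    case 0
    then show ?thesis using h4 unfolding P_def by (meson order_trans)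
  next
    case (Suc k)
    then show ?thesis using h4 unfolding P_def by blast
  qed
  have "Hyp g C l \<alpha> \<beta> f"
    unfolding Hyp_def using h4 nn conv unfolding P_def by blast
  thus ?thesis by blast
qed

lemma tau_le:
  fixes K :: complex and L :: nat and \<tau> :: real and b :: "nat \<Rightarrow> real"
  assumes rep: "\<And>z. f z = K * z ^ L * exp (of_real \<tau> * z) * (\<Prod>i. 1 + of_real (b i) * z)"
    and b0: "\<And>i. b i \<ge> 0" and smb: "summable b"
    and fA: "f \<in> A_space a" and a0: "a \<ge> 0" and fnz: "\<exists>z. f z \<noteq> 0"
  shows "\<tau> \<le> a \<and> K \<noteq> 0"
proof -
  have K0: "K \<noteq> 0"
  proof
    assume "K = 0"
    hence "f z = 0" for z using rep[of z] by simp
    with fnz show False by blast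
  qed
  have "\<tau> \<le> a"
  proof (rule ccontr)
    assume "\<not> \<tau> \<le> a"
    hence ta: "\<tau> > a" by simp
    define bb where "bb = (a + \<tau>) / 2"
    have bb: "bb > a" "bb > 0" "bb < \<tau>" using ta a0 by (auto simp: bb_def)
    have hol: "f holomorphic_on UNIV" and fin: "Anorm bb f < \<infinity>"
      using fA bb unfolding A_space_def entire_def by auto
    from Anorm_fin[OF fin bb(2)] obtain M where M: "\<And>k. norm ((deriv ^^ k) f 0) \<le> M * bb ^ k" by blast
    have gr: "norm (f z) \<le> M * exp (bb * norm z)" for z
      by (rule coef_growth[OF hol M]) (use bb in auto)
    define t where "t = \<tau> - bb"
    have t0: "t > 0" using bb by (simp add: t_def)
    have main: "norm K * (1 + t * \<rho>) \<le> M" if r: "\<rho> \<ge> 1" for \<rho>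
    proof -
      have "f (of_real \<rho>) = K * of_real \<rho> ^ L * exp (of_real \<tau> * of_real \<rho>) * of_real (RP b \<rho>)"
        using rep[of "of_real \<rho>"] RP_lim(2)[OF b0 smb, of \<rho>] by simp
      hence "norm (f (of_real \<rho>)) = norm K * \<rho> ^ L * exp (\<tau> * \<rho>) * RP b \<rho>"
        using r RP_ge1[OF b0 smb, of \<rho>] by (simp add: norm_mult norm_power flip: exp_of_real)
      moreover have "\<rho> ^ L \<ge> 1" using r by simp
      moreover have "RP b \<rho> \<ge> 1" using RP_ge1[OF b0 smb, of \<rho>] r by simp
      ultimately have "norm K * exp (\<tau> * \<rho>) \<le> norm (f (of_real \<rho>))"
        by (smt (verit, best) exp_gt_zero mult_le_cancel_left1 mult_nonneg_nonneg norm_ge_zero mult.assoc mult.commute mult_right_mono)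
      also have "\<dots> \<le> M * exp (bb * \<rho>)" using gr[of "of_real \<rho>"] r by simp
      finally have "norm K * exp (\<tau> * \<rho>) \<le> M * exp (bb * \<rho>)" .
      hence "norm K * (exp (\<tau> * \<rho>) / exp (bb * \<rho>)) \<le> M" by (simp add: field_simps)
      moreover have "exp (\<tau> * \<rho>) / exp (bb * \<rho>) = exp (t * \<rho>)" by (simp add: t_def exp_diff[symmetric] algebra_simps)
      moreover have "1 + t * \<rho> \<le> exp (t * \<rho>)" by (rule exp_ge_add_one_self)
      ultimately show ?thesis by (smt (verit) mult_left_mono norm_ge_zero)
    qed
    define \<rho> where "\<rho> = 1 + \<bar>M\<bar> / (norm K * t)"
    have "\<rho> \<ge> 1" unfolding \<rho>_def using t0 K0 by simp
    from main[OF this] have "norm K * (1 + t * \<rho>) \<le> M" .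
    moreover have "norm K * (1 + t * \<rho>) = norm K + norm K * t + \<bar>M\<bar>"
      unfolding \<rho>_def using t0 K0 by (simp add: field_simps)
    moreover have "norm K > 0" using K0 by simp
    ultimately show False using t0 by (smt (verit) mult_pos_pos)
  qed
  with K0 show ?thesis by simp
qed

lemma CQ_norm:
  fixes \<beta> :: "nat \<Rightarrow> real" and z C :: complex
  assumes "\<And>j. j < J \<Longrightarrow> \<beta> j \<noteq> 0"
  shows "norm C * (\<Prod>j<J+M. norm (1 + of_real (\<beta> j) * z))
    = norm (C * (\<Prod>j<J. of_real (\<beta> j))) * (\<Prod>j<J. norm (z + of_real (inverse (\<beta> j)))) * (\<Prod>i<M. norm (1 + of_real (\<beta> (J+i)) * z))"
proof -
  have "norm C * (\<Prod>j<J+M. norm (1 + of_real (\<beta> j) * z)) = norm (C * (\<Prod>j<J+M. 1 + of_real (\<beta> j) * z))"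
    by (simp add: norm_mult prod_norm)
  also have "(\<Prod>j<J+M. 1 + of_real (\<beta> j) * z) = (\<Prod>j<J. of_real (\<beta> j)) * (\<Prod>j<J. z + of_real (inverse (\<beta> j))) * (\<Prod>i<M. 1 + of_real (\<beta> (J+i)) * z)"
  proof -
    have PK: "(\<Prod>j<J. 1 + of_real (\<beta> j) * z) = (\<Prod>j<J. of_real (\<beta> j)) * (\<Prod>j<J. z + of_real (inverse (\<beta> j)))"
      by (rule prod_K_identity) (use assms in auto)
    show ?thesis by (simp only: prod_split_shift PK)
  qed
  finally show ?thesis by (simp add: norm_mult prod_norm mult_ac)
qed

lemma growth_sub:
  assumes H: "Hyp g C l \<alpha> \<beta> f"
    and lc: "\<And>n. l n = l0"
    and div: "\<And>j. j < J \<Longrightarrow> filterlim (\<lambda>n. \<beta> n j) at_top sequentially"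
    and Bj: "\<And>n j. J \<le> j \<Longrightarrow> \<beta> n j \<le> B" and B0: "B \<ge> 0"
    and K_lim: "(\<lambda>n. C n * (\<Prod>j<J. of_real (\<beta> n j))) \<longlonglongrightarrow> K"
    and a_lim: "\<alpha> \<longlonglongrightarrow> \<alpha>'"
    and T_lim: "(\<lambda>n. Tl (\<beta> n) J) \<longlonglongrightarrow> T"
    and b_lim: "\<And>i. (\<lambda>n. \<beta> n (J+i)) \<longlonglongrightarrow> b i"
    and smb: "summable b"
    and s: "\<alpha>' + T - (\<Sum>i. b i) < s"
  shows "\<exists>A d. A \<ge> 0 \<and> eventually (\<lambda>n. \<forall>z. norm (g n z) \<le> A * (1 + norm z) ^ d * exp (s * norm z)) sequentially"
proof -
  have "(\<lambda>M. \<alpha>' + (T - (\<Sum>i<M. b i))) \<longlonglongrightarrow> \<alpha>' + (T - (\<Sum>i. b i))"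
    by (intro tendsto_intros summable_LIMSEQ smb)
  moreover have "\<alpha>' + (T - (\<Sum>i. b i)) < s" using s by simp
  ultimately have "eventually (\<lambda>M. \<alpha>' + (T - (\<Sum>i<M. b i)) < s) sequentially"
    by (rule order_tendstoD(2))
  then obtain M where M: "\<alpha>' + (T - (\<Sum>i<M. b i)) < s" by (auto simp: eventually_at_top_linorder)
  have "(\<lambda>n. \<alpha> n + (Tl (\<beta> n) J - (\<Sum>i<M. \<beta> n (J+i)))) \<longlonglongrightarrow> \<alpha>' + (T - (\<Sum>i<M. b i))"
    by (intro tendsto_intros a_lim T_lim b_lim)
  hence e1: "eventually (\<lambda>n. \<alpha> n + Tl (\<beta> n) (J + M) < s) sequentially"
    using M unfolding Tl_shift by (intro order_tendstoD(2)) auto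
  have e2: "eventually (\<lambda>n. \<forall>j\<in>{..<J}. \<beta> n j \<ge> 1) sequentially"
    by (intro eventually_ball_finite ballI) (use div in \<open>auto simp: filterlim_at_top\<close>)
  have e3: "eventually (\<lambda>n. norm (C n * (\<Prod>j<J. of_real (\<beta> n j))) < norm K + 1) sequentially"
    using order_tendstoD(2)[OF tendsto_norm[OF K_lim], of "norm K + 1"] by simp
  define A where "A = (norm K + 1) * (1 + B) ^ M"
  have A0: "A \<ge> 0" unfolding A_def using B0 by simp
  have "eventually (\<lambda>n. \<forall>z. norm (g n z) \<le> A * (1 + norm z) ^ (l0 + J + M) * exp (s * norm z)) sequentially"
    using e1 e2 e3
  proof eventually_elim
    case (elim n)
    show ?case
    proof
      fix z :: complex
      have nn: "\<And>j. \<beta> n j \<ge> 0" and sm: "summable (\<beta> n)" and a0: "\<alpha> n \<ge> 0" using HypD[OF H] by auto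
      have nz: "\<beta> n j \<noteq> 0" if "j < J" for j
      proof -
        have "\<beta> n j \<ge> 1" using elim(2) that by simp
        thus ?thesis by simp
      qed
      define Kn where "Kn = C n * (\<Prod>j<J. of_real (\<beta> n j))"
      define P where "P = (\<Prod>j. 1 + of_real (\<beta> n j) * z)"
      have gz: "g n z = C n * z ^ l0 * exp (of_real (\<alpha> n) * z) * P"
        unfolding P_def using HypD(5)[OF H, of n z] lc[of n] by simp
      have Pb: "norm P \<le> (\<Prod>j<J+M. norm (1 + of_real (\<beta> n j) * z)) * exp (norm z * Tl (\<beta> n) (J+M))"
        unfolding P_def by (rule prod_upper[OF nn sm])
      have eb: "norm (exp (of_real (\<alpha> n) * z)) \<le> exp (\<alpha> n * norm z)"
        using norm_exp[of "of_real (\<alpha> n) * z"] a0 by (simp add: norm_mult)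
      have Pinvb: "(\<Prod>j<J. norm (z + of_real (inverse (\<beta> n j)))) \<le> (1 + norm z) ^ J"
      proof -
        have "(\<Prod>j<J. norm (z + of_real (inverse (\<beta> n j)))) \<le> (\<Prod>j<J. 1 + norm z)"
        proof (rule prod_mono, safe)
          fix j assume j: "j < J"
          have b1: "\<beta> n j \<ge> 1" using elim(2) j by auto
          have "norm (z + of_real (inverse (\<beta> n j))) \<le> norm z + norm (of_real (inverse (\<beta> n j)) :: complex)"
            by (rule norm_triangle_ineq)
          also have "norm (of_real (inverse (\<beta> n j)) :: complex) \<le> 1"
            unfolding norm_of_real using b1 by (simp add: inverse_le_1_iff)
          finally show "norm (z + of_real (inverse (\<beta> n j))) \<le> 1 + norm z" by simp
        qed auto
        thus ?thesis by simp
      qed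
      have Pmb: "(\<Prod>i<M. norm (1 + of_real (\<beta> n (J+i)) * z)) \<le> ((1 + B) * (1 + norm z)) ^ M"
      proof -
        have "(\<Prod>i<M. norm (1 + of_real (\<beta> n (J+i)) * z)) \<le> (\<Prod>i<M. (1 + B) * (1 + norm z))"
        proof (rule prod_mono, safe)
          fix i
          have bB: "\<beta> n (J+i) \<le> B" by (rule Bj) simp
          have "norm (1 + of_real (\<beta> n (J+i)) * z) \<le> 1 + \<beta> n (J+i) * norm z"
            using nn[of "J+i"] by (metis norm_one norm_triangle_ineq norm_mult norm_of_real abs_of_nonneg)
          also have "\<dots> \<le> 1 + B * norm z" using bB by (simp add: mult_right_mono)
          also have "\<dots> \<le> (1 + B) * (1 + norm z)" using B0 by (simp add: algebra_simps)
          finally show "norm (1 + of_real (\<beta> n (J+i)) * z) \<le> (1 + B) * (1 + norm z)" .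
        qed auto
        thus ?thesis by simp
      qed
      have CQ: "norm (C n) * (\<Prod>j<J+M. norm (1 + of_real (\<beta> n j) * z))
          = norm Kn * (\<Prod>j<J. norm (z + of_real (inverse (\<beta> n j)))) * (\<Prod>i<M. norm (1 + of_real (\<beta> n (J+i)) * z))"
        unfolding Kn_def by (rule CQ_norm) (use nz in auto)
      have "norm (g n z) = norm (C n) * norm z ^ l0 * norm (exp (of_real (\<alpha> n) * z)) * norm P"
        unfolding gz by (simp add: norm_mult norm_power)
      also have "\<dots> \<le> norm (C n) * norm z ^ l0 * exp (\<alpha> n * norm z) *
          ((\<Prod>j<J+M. norm (1 + of_real (\<beta> n j) * z)) * exp (norm z * Tl (\<beta> n) (J+M)))"
        by (intro mult_mono mult_left_mono eb Pb) auto
      also have "\<dots> = (norm (C n) * (\<Prod>j<J+M. norm (1 + of_real (\<beta> n j) * z))) * norm z ^ l0 *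
          (exp (\<alpha> n * norm z) * exp (norm z * Tl (\<beta> n) (J+M)))"
        by (simp only: mult_ac)
      also have "exp (\<alpha> n * norm z) * exp (norm z * Tl (\<beta> n) (J+M)) = exp ((\<alpha> n + Tl (\<beta> n) (J+M)) * norm z)"
        by (simp add: exp_add[symmetric] algebra_simps)
      finally have st1: "norm (g n z) \<le> (norm (C n) * (\<Prod>j<J+M. norm (1 + of_real (\<beta> n j) * z))) * norm z ^ l0 *
          exp ((\<alpha> n + Tl (\<beta> n) (J+M)) * norm z)" .
      have st2: "exp ((\<alpha> n + Tl (\<beta> n) (J+M)) * norm z) \<le> exp (s * norm z)" using elim(1) by (simp add: mult_right_mono)
      have st3: "norm (C n) * (\<Prod>j<J+M. norm (1 + of_real (\<beta> n j) * z)) \<le> (norm K + 1) * (1 + norm z) ^ J * ((1 + B) * (1 + norm z)) ^ M"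
        unfolding CQ using elim(3) Pinvb Pmb unfolding Kn_def
        by (intro mult_mono) (auto intro!: prod_nonneg)
      have st4: "norm z ^ l0 \<le> (1 + norm z) ^ l0" by (intro power_mono) auto
      have "norm (g n z) \<le> (norm K + 1) * (1 + norm z) ^ J * ((1 + B) * (1 + norm z)) ^ M * (1 + norm z) ^ l0 * exp (s * norm z)"
        using st1 mult_mono[OF mult_mono[OF st3 st4] st2] B0 by (simp add: prod_nonneg)
      also have "\<dots> = A * (1 + norm z) ^ (l0 + J + M) * exp (s * norm z)"
        unfolding A_def by (simp add: power_add power_mult_distrib mult_ac)
      finally show "norm (g n z) \<le> A * (1 + norm z) ^ (l0 + J + M) * exp (s * norm z)" .
    qed
  qed
  thus ?thesis using A0 by blast
qed

lemma key:
  fixes g :: "nat \<Rightarrow> complex \<Rightarrow> complex" and f :: "complex \<Rightarrow> complex" and a :: real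
  assumes gL: "\<And>n. g n \<in> Laguerre_a a" and conv: "\<And>z. (\<lambda>n. g n z) \<longlonglongrightarrow> f z"
    and fA: "f \<in> A_space a" and fnz: "\<exists>z. f z \<noteq> 0" and a0: "a \<ge> 0"
  shows "f \<in> Laguerre \<and> (\<exists>\<psi>::nat\<Rightarrow>nat. strict_mono \<psi> \<and> (\<forall>b>a. \<exists>G. eventually (\<lambda>i. Anorm b (g (\<psi> i)) \<le> ereal G) sequentially))"
proof -
  have gL': "g n \<in> Laguerre" for n using gL[of n] by (simp add: Laguerre_a_def)
  have hol: "g n holomorphic_on UNIV" for n using gL[of n] by (simp add: Laguerre_a_def A_space_def entire_def)
  obtain C l \<alpha> \<beta> where H: "Hyp g C l \<alpha> \<beta> f" using Laguerre_Hyp[OF gL' conv] by blast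
  have fhol: "f holomorphic_on UNIV" using fA by (simp add: A_space_def entire_def)
  obtain N c \<delta> where lowc: "c > 0" and lowd: "\<delta> > 0"
    and lowf: "\<forall>\<rho>. 0 < \<rho> \<and> \<rho> < \<delta> \<longrightarrow> c * \<rho> ^ N \<le> norm (f (of_real \<rho>))"
    using order_lower[OF fhol fnz] by blast
  have low3: "\<And>\<rho>. 0 < \<rho> \<Longrightarrow> \<rho> < \<delta> \<Longrightarrow> c * \<rho> ^ N \<le> norm (f (of_real \<rho>))" using lowf by blast
  note low = lowc lowd low3
  obtain \<phi>0 :: "nat \<Rightarrow> nat" and l0 where \<phi>0: "strict_mono \<phi>0" "\<And>i. l (\<phi>0 i) = l0"
    using l_const[OF H low] by blast
  note H0 = Hyp_subseq[OF H \<phi>0(1)]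
  obtain \<phi>1 :: "nat \<Rightarrow> nat" and J B1 where \<phi>1: "strict_mono \<phi>1"
    and div1: "\<And>j. j < J \<Longrightarrow> filterlim (\<lambda>i. \<beta> (\<phi>0 (\<phi>1 i)) j) at_top sequentially"
    and bd1: "\<And>i. \<beta> (\<phi>0 (\<phi>1 i)) J \<le> B1"
    using J_select[OF H0 low \<phi>0(2)] by blast
  note H1 = Hyp_subseq[OF H0 \<phi>1(1)]
  define B where "B = max 0 B1"
  have B0: "B \<ge> 0" by (simp add: B_def)
  have Bj: "\<beta> (\<phi>0 (\<phi>1 n)) j \<le> B" if "J \<le> j" for n j
  proof -
    have "\<beta> (\<phi>0 (\<phi>1 n)) j \<le> \<beta> (\<phi>0 (\<phi>1 n)) J"
      using decr_le[of "\<beta> (\<phi>0 (\<phi>1 n))" J j] HypD(3)[OF H] that by blast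
    also have "\<dots> \<le> B" using bd1[of n] by (simp add: B_def)
    finally show ?thesis .
  qed
  define \<rho>0 where "\<rho>0 = \<delta> / 2"
  have r0: "\<rho>0 > 0" "\<rho>0 < \<delta>" using lowd by (auto simp: \<rho>0_def)
  have fr0: "f (of_real \<rho>0) \<noteq> 0"
  proof -
    have "0 < c * \<rho>0 ^ N" using lowc r0 by simp
    also have "\<dots> \<le> norm (f (of_real \<rho>0))" using low3 r0 by blast
    finally show ?thesis by auto
  qed
  obtain SB KB where SK: "eventually (\<lambda>n. \<alpha> (\<phi>0 (\<phi>1 n)) + Tl (\<beta> (\<phi>0 (\<phi>1 n))) J \<le> SB \<and>
      norm (C (\<phi>0 (\<phi>1 n)) * (\<Prod>j<J. of_real (\<beta> (\<phi>0 (\<phi>1 n)) j))) \<le> KB) sequentially"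
  proof -
    have lc1: "\<And>n. l (\<phi>0 (\<phi>1 n)) = l0" using \<phi>0(2) by simp
    show ?thesis using S_bound[OF H1 r0(1) fr0 Bj B0 lc1] that by blast
  qed
  then obtain n0 where n0: "\<And>n. n \<ge> n0 \<Longrightarrow> \<alpha> (\<phi>0 (\<phi>1 n)) + Tl (\<beta> (\<phi>0 (\<phi>1 n))) J \<le> SB \<and>
      norm (C (\<phi>0 (\<phi>1 n)) * (\<Prod>j<J. of_real (\<beta> (\<phi>0 (\<phi>1 n)) j))) \<le> KB"
    by (auto simp: eventually_at_top_linorder)
  define idx where "idx n = \<phi>0 (\<phi>1 (n + n0))" for n
  have idx_mono: "strict_mono idx" unfolding idx_def using \<phi>0(1) \<phi>1(1)
    by (auto simp: strict_mono_def)
  have H2: "Hyp (\<lambda>n. g (idx n)) (\<lambda>n. C (idx n)) (\<lambda>n. l (idx n)) (\<lambda>n. \<alpha> (idx n)) (\<lambda>n. \<beta> (idx n)) f"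
    unfolding idx_def using Hyp_shift[OF H1, of n0] by simp
  define Kn where "Kn n = C (idx n) * (\<Prod>j<J. of_real (\<beta> (idx n) j))" for n
  define v where "v n i = (if i = 0 then Re (Kn n) else if i = 1 then Im (Kn n) else if i = 2 then \<alpha> (idx n)
      else if i = 3 then Tl (\<beta> (idx n)) J else \<beta> (idx n) (J + (i - 4)))" for n i
  define Bd where "Bd = KB + SB + B"
  have vb: "\<bar>v n i\<bar> \<le> Bd" for n i
  proof -
    have bnd: "\<alpha> (idx n) + Tl (\<beta> (idx n)) J \<le> SB" "norm (Kn n) \<le> KB"
      using n0[of "n + n0"] unfolding Kn_def idx_def by auto
    have a0n: "\<alpha> (idx n) \<ge> 0" and Tl0: "Tl (\<beta> (idx n)) J \<ge> 0"
      using HypD[OF H2, of n] Tl_nonneg[of "\<beta> (idx n)" J] by auto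
    have SB0: "SB \<ge> 0" using bnd a0n Tl0 by linarith
    have KB0: "KB \<ge> 0" using bnd(2) norm_ge_zero order_trans by blast
    have bb: "\<beta> (idx n) (J + (i - 4)) \<le> B" "\<beta> (idx n) (J + (i - 4)) \<ge> 0"
      using Bj[of J "n + n0"] HypD(2)[OF H2] Bj unfolding idx_def by auto
    show ?thesis
      using bnd a0n Tl0 SB0 KB0 bb B0 abs_Re_le_cmod[of "Kn n"] abs_Im_le_cmod[of "Kn n"]
      unfolding v_def Bd_def by (auto split: if_splits)
  qed
  obtain \<psi> :: "nat \<Rightarrow> nat" and w where \<psi>: "strict_mono \<psi>" and w: "\<And>i. (\<lambda>n. v (\<psi> n) i) \<longlonglongrightarrow> w i"
    using diag_subseq[of v Bd] vb by blast
  note H3 = Hyp_subseq[OF H2 \<psi>]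
  define K where "K = Complex (w 0) (w 1)"
  define bl where "bl i = w (i + 4)" for i
  have K_lim: "(\<lambda>n. C (idx (\<psi> n)) * (\<Prod>j<J. of_real (\<beta> (idx (\<psi> n)) j))) \<longlonglongrightarrow> K"
  proof -
    have "(\<lambda>n. Complex (v (\<psi> n) 0) (v (\<psi> n) 1)) \<longlonglongrightarrow> K" unfolding K_def by (intro tendsto_Complex w)
    moreover have "Complex (v (\<psi> n) 0) (v (\<psi> n) 1) = C (idx (\<psi> n)) * (\<Prod>j<J. of_real (\<beta> (idx (\<psi> n)) j))" for n
    proof -
      have "Complex (v (\<psi> n) 0) (v (\<psi> n) 1) = Kn (\<psi> n)" by (simp add: v_def)
      thus ?thesis unfolding Kn_def .
    qed
    ultimately show ?thesis by simp
  qed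
  have a_lim: "(\<lambda>n. \<alpha> (idx (\<psi> n))) \<longlonglongrightarrow> w 2" using w[of 2] by (simp add: v_def)
  have T_lim: "(\<lambda>n. Tl (\<beta> (idx (\<psi> n))) J) \<longlonglongrightarrow> w 3" using w[of 3] by (simp add: v_def)
  have b_lim: "(\<lambda>n. \<beta> (idx (\<psi> n)) (J + i)) \<longlonglongrightarrow> bl i" for i
    using w[of "i + 4"] by (simp add: v_def bl_def)
  have div3: "filterlim (\<lambda>n. \<beta> (idx (\<psi> n)) j) at_top sequentially" if "j < J" for j
  proof -
    have sm: "strict_mono (\<lambda>n. \<psi> n + n0)" using \<psi> by (auto simp: strict_mono_def)
    from filterlim_compose[OF div1[OF that] filterlim_subseq[OF sm]] show ?thesis by (simp add: idx_def)
  qed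
  have lc3: "l (idx (\<psi> n)) = l0" for n unfolding idx_def using \<phi>0(2) by simp
  have Bj3: "\<beta> (idx (\<psi> n)) j \<le> B" if "J \<le> j" for n j unfolding idx_def using Bj[OF that] by simp
  have RL: "(\<forall>i. bl i \<ge> 0 \<and> bl (Suc i) \<le> bl i) \<and> summable bl \<and> (\<Sum>i. bl i) \<le> w 3 \<and> w 2 \<ge> 0 \<and>
    (\<forall>z. f z = K * z ^ (l0 + J) * exp (of_real (w 2 + w 3 - (\<Sum>i. bl i)) * z) * (\<Prod>i. 1 + of_real (bl i) * z))"
    by (rule rep_limit[OF H3 lc3 div3 K_lim a_lim T_lim b_lim])
  define \<tau> where "\<tau> = w 2 + w 3 - (\<Sum>i. bl i)"
  have bl0: "\<And>i. bl i \<ge> 0" and smb: "summable bl" and rep: "\<And>z. f z = K * z ^ (l0 + J) * exp (of_real \<tau> * z) * (\<Prod>i. 1 + of_real (bl i) * z)"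
    using RL unfolding \<tau>_def by auto
  have fL: "f \<in> Laguerre"
    unfolding Laguerre_def
  proof (intro CollectI exI conjI allI)
    show "0 \<le> \<tau>" using RL unfolding \<tau>_def by auto
    show "bl (Suc j) \<le> bl j" for j using RL by auto
    show "0 \<le> bl (Suc j)" for j using RL by auto
    show "summable bl" by (rule smb)
    show "f z = K * z ^ (l0 + J) * exp (of_real \<tau> * z) * (\<Prod>j. 1 + of_real (bl j) * z)" for z by (rule rep)
  qed
  have ta: "\<tau> \<le> a" using tau_le[OF rep bl0 smb fA a0 fnz] by blast
  have "\<forall>b>a. \<exists>G. eventually (\<lambda>i. Anorm b (g (idx (\<psi> i))) \<le> ereal G) sequentially"
  proof (intro allI impI)
    fix b :: real assume ba: "b > a"
    define s where "s = (a + b) / 2"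
    have s: "0 < s" "s < b" "w 2 + w 3 - (\<Sum>i. bl i) < s" using ba a0 ta by (auto simp: s_def \<tau>_def)
    obtain A d where A0: "A \<ge> 0" and ev: "eventually (\<lambda>n. \<forall>z. norm (g (idx (\<psi> n)) z) \<le> A * (1 + norm z) ^ d * exp (s * norm z)) sequentially"
      using growth_sub[OF H3 lc3 div3 Bj3 B0 K_lim a_lim T_lim b_lim smb s(3)] by blast
    obtain G where G: "\<forall>h. h holomorphic_on UNIV \<longrightarrow> (\<forall>z. norm (h z) \<le> A * (1 + norm z) ^ d * exp (s * norm z))
            \<longrightarrow> (\<forall>k. norm ((deriv ^^ k) h 0) \<le> G * b ^ k)"
      using growth_coef[OF s(1) s(2) A0] by blast
    have "eventually (\<lambda>i. Anorm b (g (idx (\<psi> i))) \<le> ereal G) sequentially"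
      using ev
    proof eventually_elim
      case (elim n)
      have "norm ((deriv ^^ k) (g (idx (\<psi> n))) 0) \<le> G * b ^ k" for k
        using G hol elim by blast
      hence "norm ((deriv ^^ k) (g (idx (\<psi> n))) 0) / b ^ k \<le> G" for k
        using ba a0 by (simp add: divide_le_eq)
      thus ?case by (rule Anorm_le)
    qed
    thus "\<exists>G. eventually (\<lambda>i. Anorm b (g (idx (\<psi> i))) \<le> ereal G) sequentially" by blast
  qed
  moreover have "strict_mono (\<lambda>i. idx (\<psi> i))" using idx_mono \<psi> by (simp add: strict_mono_def)
  ultimately show ?thesis using fL by blast
qed

primrec pick :: "(nat \<Rightarrow> ereal) \<Rightarrow> nat \<Rightarrow> nat" where
  "pick u 0 = (SOME n. u n > ereal 0)"
| "pick u (Suc i) = (SOME n. n > pick u i \<and> u n > ereal (real (Suc i)))"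

lemma subseq_unbounded:
  fixes u :: "nat \<Rightarrow> ereal"
  assumes unb: "\<And>Z m. \<exists>n\<ge>m. u n > ereal Z"
  shows "\<exists>\<phi>::nat\<Rightarrow>nat. strict_mono \<phi> \<and> (\<forall>i. u (\<phi> i) > ereal (real i))"
proof -
  have P0: "u (pick u 0) > ereal 0"
  proof -
    obtain n where "u n > ereal 0" using unb[where Z=0 and m=0] by blast
    thus ?thesis by (simp add: someI_ex[of "\<lambda>n. u n > ereal 0"]) (metis (mono_tags) someI_ex)
  qed
  have PS: "pick u (Suc i) > pick u i \<and> u (pick u (Suc i)) > ereal (real (Suc i))" for i
  proof -
    obtain n where "n \<ge> Suc (pick u i) \<and> u n > ereal (real (Suc i))" using unb[where Z="real (Suc i)" and m="Suc (pick u i)"] by blast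
    hence "\<exists>n. n > pick u i \<and> u n > ereal (real (Suc i))" by (auto simp: Suc_le_eq)
    from someI_ex[OF this] show ?thesis by simp
  qed
  have "strict_mono (pick u)" unfolding strict_mono_Suc_iff using PS by blast
  moreover have "u (pick u i) > ereal (real i)" for i
    by (cases i) (use P0 PS in auto)
  ultimately show ?thesis by blast
qed

theorem theorem1p2:
  fixes a :: real and fs :: "nat \<Rightarrow> complex \<Rightarrow> complex" and f :: "complex \<Rightarrow> complex"
  assumes "a \<ge> 0"
    and "\<And>n. fs n \<in> Laguerre_a a"
    and "\<And>K. compact K \<Longrightarrow> uniform_limit K fs f sequentially"
    and "f \<in> A_space a"
    and "\<exists>z. f z \<noteq> 0"
  shows "A_bounded a (range fs) \<and> A_converges a fs f \<and> f \<in> Laguerre"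
proof -
  have conv: "(\<lambda>n. fs n z) \<longlonglongrightarrow> f z" for z
  proof -
    have "uniform_limit {z} fs f sequentially" by (rule assms(3)) simp
    from tendsto_uniform_limitI[OF this] show ?thesis by simp
  qed
  have hol: "fs n holomorphic_on UNIV" for n using assms(2)[of n] by (simp add: Laguerre_a_def A_space_def entire_def)
  have fhol: "f holomorphic_on UNIV" using assms(4) by (simp add: A_space_def entire_def)
  have Afin: "Anorm b (fs n) < \<infinity>" if "b > a" for b n
    using assms(2)[of n] that by (simp add: Laguerre_a_def A_space_def)
  have fL: "f \<in> Laguerre" using key[OF assms(2) conv assms(4) assms(5) assms(1)] by blast
  have bdd: "(SUP g\<in>range fs. Anorm b g) < \<infinity>" if ba: "b > a" for b
  proof (rule ccontr)
    assume nb: "\<not> (SUP g\<in>range fs. Anorm b g) < \<infinity>"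
    have unb: "\<exists>n\<ge>m. Anorm b (fs n) > ereal Z" for Z m
    proof (rule ccontr)
      assume "\<not> (\<exists>n\<ge>m. Anorm b (fs n) > ereal Z)"
      hence le: "\<And>n. n \<ge> m \<Longrightarrow> Anorm b (fs n) \<le> ereal Z" by (auto simp: not_less)
      define S where "S = insert (ereal Z) ((\<lambda>n. Anorm b (fs n)) ` {..<m})"
      have finS: "finite S" unfolding S_def by simp
      have "(SUP g\<in>range fs. Anorm b g) \<le> Max S"
      proof (rule SUP_least)
        fix g assume "g \<in> range fs"
        then obtain n where gn: "g = fs n" by blast
        show "Anorm b g \<le> Max S"
        proof (cases "n \<ge> m")
          case True
          hence "Anorm b g \<le> ereal Z" using le gn by simp
          also have "ereal Z \<le> Max S" using finS by (simp add: S_def)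
          finally show ?thesis .
        next
          case False
          hence "Anorm b g \<in> S" unfolding S_def gn by auto
          thus ?thesis using finS by simp
        qed
      qed
      moreover have "Max S < \<infinity>"
      proof -
        have "Max S \<in> S" using finS by (rule Max_in) (simp add: S_def)
        thus ?thesis unfolding S_def using Afin[OF ba] by auto
      qed
      ultimately show False using nb by simp
    qed
    obtain \<phi> :: "nat \<Rightarrow> nat" where \<phi>: "strict_mono \<phi>" "\<And>i. Anorm b (fs (\<phi> i)) > ereal (real i)"
      using subseq_unbounded[of "\<lambda>n. Anorm b (fs n)"] unb by blast
    have gL2: "fs (\<phi> n) \<in> Laguerre_a a" for n by (rule assms(2))
    have conv2: "(\<lambda>n. fs (\<phi> n) z) \<longlonglongrightarrow> f z" for z
      using LIMSEQ_subseq_LIMSEQ[OF conv \<phi>(1)] by (simp add: o_def)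
    obtain \<psi> :: "nat \<Rightarrow> nat" where \<psi>: "strict_mono \<psi>"
      and evb: "\<forall>b>a. \<exists>G. eventually (\<lambda>i. Anorm b (fs (\<phi> (\<psi> i))) \<le> ereal G) sequentially"
      using key[of "\<lambda>n. fs (\<phi> n)" a f, OF gL2 conv2 assms(4) assms(5) assms(1)] by blast
    obtain G where "eventually (\<lambda>i. Anorm b (fs (\<phi> (\<psi> i))) \<le> ereal G) sequentially" using evb ba by blast
    then obtain N where N: "\<And>i. i \<ge> N \<Longrightarrow> Anorm b (fs (\<phi> (\<psi> i))) \<le> ereal G"
      by (auto simp: eventually_at_top_linorder)
    define i where "i = N + nat \<lceil>G\<rceil>"
    have "ereal (real (\<psi> i)) < ereal G" using \<phi>(2)[of "\<psi> i"] N[of i] unfolding i_def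
      by (meson le_add1 less_le_trans)
    hence "real (\<psi> i) < G" by simp
    moreover have "i \<le> \<psi> i" by (rule seq_suble[OF \<psi>])
    moreover have "G \<le> real i" unfolding i_def by linarith
    ultimately show False by linarith
  qed
  have Abdd: "A_bounded a (range fs)"
    unfolding A_bounded_def using assms(2) bdd by (auto simp: Laguerre_a_def)
  have Aconv: "A_converges a fs f"
    unfolding A_converges_def
  proof (intro allI impI)
    fix b assume ba: "b > a"
    define b' where "b' = (a + b) / 2"
    have b': "b' > a" "b' > 0" "b' < b" "b > 0" using ba assms(1) by (auto simp: b'_def)
    obtain M1 where M1: "\<And>n k. norm ((deriv ^^ k) (fs n) 0) \<le> M1 * b' ^ k"
    proof -
      have sfin: "(SUP g\<in>range fs. Anorm b' g) < \<infinity>" by (rule bdd[OF b'(1)])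
      have ge: "Anorm b' (fs n) \<le> (SUP g\<in>range fs. Anorm b' g)" for n by (rule SUP_upper) simp
      have "ereal (norm ((deriv ^^ 0) (fs 0) 0) / b' ^ 0) \<le> Anorm b' (fs 0)" by (rule Anorm_upper)
      hence "0 \<le> (SUP g\<in>range fs. Anorm b' g)" using ge[of 0] by (smt (verit) norm_ge_zero order_trans ereal_less_eq(5) divide_nonneg_pos zero_less_power b'(2))
      with sfin obtain S where S: "(SUP g\<in>range fs. Anorm b' g) = ereal S" by (cases "(SUP g\<in>range fs. Anorm b' g)") auto
      have "norm ((deriv ^^ k) (fs n) 0) \<le> S * b' ^ k" for n k
      proof -
        have "ereal (norm ((deriv ^^ k) (fs n) 0) / b' ^ k) \<le> (SUP g\<in>range fs. Anorm b' g)"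
          using order_trans[OF Anorm_upper[of k "fs n" b'] ge[of n]] .
        hence "ereal (norm ((deriv ^^ k) (fs n) 0) / b' ^ k) \<le> ereal S" unfolding S .
        thus ?thesis using b'(2) by (simp add: divide_le_eq)
      qed
      thus ?thesis by (rule that)
    qed
    obtain M2 where M2: "\<And>k. norm ((deriv ^^ k) f 0) \<le> M2 * b' ^ k"
      using Anorm_fin[of b' f] assms(4) b' by (auto simp: A_space_def)
    have dif: "(deriv ^^ k) (\<lambda>z. fs n z - f z) 0 = (deriv ^^ k) (fs n) 0 - (deriv ^^ k) f 0" for n k
      by (rule higher_deriv_diff[OF hol fhol open_UNIV UNIV_I])
    have big: "norm ((deriv ^^ k) (\<lambda>z. fs n z - f z) 0) \<le> (M1 + M2) * b' ^ k" for n k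
      unfolding dif using norm_triangle_ineq4[of "(deriv ^^ k) (fs n) 0" "(deriv ^^ k) f 0"] M1[where n=n and k=k] M2[of k]
      by (simp add: algebra_simps)
    have Anonneg: "0 \<le> Anorm b (\<lambda>z. fs n z - f z)" for n
    proof -
      have "ereal (norm ((deriv ^^ 0) (\<lambda>z. fs n z - f z) 0) / b ^ 0) \<le> Anorm b (\<lambda>z. fs n z - f z)" by (rule Anorm_upper)
      thus ?thesis by (rule order_trans[rotated]) simp
    qed
    show "(\<lambda>n. Anorm b (\<lambda>z. fs n z - f z)) \<longlonglongrightarrow> 0"
    proof (rule order_tendstoI)
      fix y :: ereal assume "y < 0"
      thus "eventually (\<lambda>n. y < Anorm b (\<lambda>z. fs n z - f z)) sequentially"
        using Anonneg by (intro always_eventually allI) (auto intro: less_le_trans)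
    next
      fix y :: ereal assume y0: "0 < y"
      obtain \<epsilon> where \<epsilon>: "0 < ereal \<epsilon>" "ereal \<epsilon> < y" using ereal_dense2[OF y0] by blast
      hence e0: "\<epsilon> > 0" by simp
      define e where "e = \<epsilon> / 2"
      have e: "e > 0" using e0 by (simp add: e_def)
      have "ereal e \<le> ereal \<epsilon>" using e0 by (simp add: e_def)
      hence e2: "ereal e < y" using \<epsilon>(2) by (rule le_less_trans)
      note e = e e2
      define q where "q = b' / b"
      have q: "0 \<le> q" "q < 1" using b' by (auto simp: q_def)
      have "(\<lambda>k. (M1 + M2) * q ^ k) \<longlonglongrightarrow> (M1 + M2) * 0"
        by (intro tendsto_intros LIMSEQ_power_zero) (use q in auto)
      hence "eventually (\<lambda>k. (M1 + M2) * q ^ k < e) sequentially"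
        using e(1) by (intro order_tendstoD(2)) auto
      then obtain K0 where K0: "\<And>k. k \<ge> K0 \<Longrightarrow> (M1 + M2) * q ^ k < e" by (auto simp: eventually_at_top_linorder)
      define D where "D = (\<Sum>k<K0. fact k / b ^ k) + 1"
      have Dk: "fact k / b ^ k \<le> D" if "k < K0" for k
      proof -
        have "fact k / b ^ k \<le> (\<Sum>k<K0. fact k / b ^ k)"
          using that b'(4) by (intro member_le_sum) auto
        thus ?thesis by (simp add: D_def)
      qed
      have D0: "D > 0" unfolding D_def using b'(4) by (simp add: add_nonneg_pos sum_nonneg)
      define \<delta> where "\<delta> = e / D"
      have d0: "\<delta> > 0" using e D0 by (simp add: \<delta>_def)
      have ul: "eventually (\<lambda>n. \<forall>x\<in>cball 0 1. dist (fs n x) (f x) < \<delta>) sequentially"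
        by (rule uniform_limitD[OF assms(3)[OF compact_cball] d0])
      have "eventually (\<lambda>n. Anorm b (\<lambda>z. fs n z - f z) \<le> ereal e) sequentially"
        using ul
      proof eventually_elim
        case (elim n)
        have "norm ((deriv ^^ k) (\<lambda>z. fs n z - f z) 0) / b ^ k \<le> e" for k
        proof (cases "k \<ge> K0")
          case True
          have "norm ((deriv ^^ k) (\<lambda>z. fs n z - f z) 0) / b ^ k \<le> (M1 + M2) * b' ^ k / b ^ k"
            using big[of k n] b'(4) by (intro divide_right_mono) auto
          also have "\<dots> = (M1 + M2) * q ^ k" by (simp add: q_def power_divide)
          also have "\<dots> < e" using K0[OF True] .
          finally show ?thesis by simp
        next
          case False
          have "norm ((deriv ^^ k) (\<lambda>z. fs n z - f z) 0) \<le> fact k * \<delta> / 1 ^ k"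
          proof (rule Cauchy_inequality)
            show "(\<lambda>z. fs n z - f z) holomorphic_on ball 0 1"
              using hol fhol by (intro holomorphic_intros) (auto intro: holomorphic_on_subset)
            show "continuous_on (cball 0 1) (\<lambda>z. fs n z - f z)"
              using holomorphic_on_imp_continuous_on[OF hol] holomorphic_on_imp_continuous_on[OF fhol]
              by (intro continuous_intros) (auto intro: continuous_on_subset)
            fix x :: complex assume "norm (0 - x) = 1"
            hence "x \<in> cball 0 1" by simp
            thus "norm (fs n x - f x) \<le> \<delta>" using elim by (auto simp: dist_norm less_imp_le)
          qed simp
          hence "norm ((deriv ^^ k) (\<lambda>z. fs n z - f z) 0) / b ^ k \<le> (fact k / b ^ k) * \<delta>"
            using b'(4) by (simp add: divide_right_mono field_simps)
          also have "\<dots> \<le> D * \<delta>" using Dk[of k] False d0 by (intro mult_right_mono) auto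
          also have "\<dots> = e" using D0 by (simp add: \<delta>_def)
          finally show ?thesis .
        qed
        thus ?case by (rule Anorm_le)
      qed
      thus "eventually (\<lambda>n. Anorm b (\<lambda>z. fs n z - f z) < y) sequentially"
        using e(2) by (auto elim: eventually_mono intro: le_less_trans)
    qed
  qed
  show ?thesis using Abdd Aconv fL by blast
qed

end
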